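(* Let $D\ge1$, $p>0$, integers $b\ge1$, $k\ge1$, $B\ge1$, and nonzero $u,v\in\mathbb{R}^D$. For $j=1,\dots,k$, let $(i^*_{u,j},t^*_{u,j})$, $(i^*_{v,j},t^*_{v,j})$ be GCWS outputs for $u$ and $v$ computed with the $j$-th set of shared random numbers, the $k$ sets being mutually independent, and let $(i^*_{u,j},t^*_{u,j})_b=g_j(i^*_{u,j},t^*_{u,j})$, $(i^*_{v,j},t^*_{v,j})_b=g_j(i^*_{v,j},t^*_{v,j})$, where $g_1,\dots,g_k$ are mutually independent random functions from $\{1,\dots,2D\}\times\mathbb{Z}$ to $\{0,\dots,2^b-1\}$ with independent uniform values, independent of all GCWS randomness. Let $P_b=P\{(i^*_{u,1},t^*_{u,1})_b=(i^*_{v,1},t^*_{v,1})_b\}$. Let $x,y\in\{0,1\}^{d}$, $d=2^b k$, be the concatenations of the one-hot encodings of $(i^*_{u,j},t^*_{u,j})_b$, $j=1..k$, and of $(i^*_{v,j},t^*_{v,j})_b$, $j=1..k$, respectively. Let $z,w\in\mathbb{R}^B$ be the count-sketch of $x$ and $y$ with $B$ bins (described in the context), the count-sketch randomness being independent of everything else. Let $$a=\sum_{j=1}^k 1\{(i^*_{u,j},t^*_{u,j})_b=(i^*_{v,j},t^*_{v,j})_b\}.$$ Then, conditioning on all the values $(i^*_{u,j},t^*_{u,j})_b,(i^*_{v,j},t^*_{v,j})_b$, $j=1,\dots,k$ (denoted GCWS), $$E\{\langle z,w\rangle\mid \text{GCWS}\}=a,\qquad \mathrm{Var}\{\langle z,w\rangle\mid\text{GCWS}\}=\frac1B\left[k^2+a^2-2a\right];$$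 $a$ has the binomial distribution $\mathrm{Bin}(k,P_b)$; unconditionally $$E\{\langle z,w\rangle\}=kP_b,\qquad \mathrm{Var}\{\langle z,w\rangle\}=\frac1B\left[k^2+k^2P_b^2-kP_b^2-kP_b\right]+kP_b(1-P_b);$$ and the estimator $\hat P_b=\langle z,w\rangle/k$ satisfies $$E(\hat P_b)=P_b,\qquad \mathrm{Var}(\hat P_b)=\frac{P_b(1-P_b)}{k}+\frac1B\left[1+P_b^2-P_b^2/k-P_b/k\right].$$
   Context: Sign-splitting transformation: for $u\in\mathbb{R}^D$, $\tilde u\in\mathbb{R}^{2D}$ with, for each $i$: if $u_i>0$ then $\tilde u_{2i-1}=u_i,\tilde u_{2i}=0$; if $u_i\le 0$ then $\tilde u_{2i-1}=0,\tilde u_{2i}=-u_i$. GCWS procedure (one set of random numbers): draw independently for $i=1,\dots,2D$: $r_i\sim\mathrm{Gamma}(2,1)$, $c_i\sim\mathrm{Gamma}(2,1)$, $\beta_i\sim\mathrm{Uniform}(0,1)$; for each $i$ with $\tilde u_i>0$ set $t_i=\lfloor p\log(\tilde u_i)/r_i+\beta_i\rfloor$, $a_i=\log(c_i)-r_i(t_i+1-\beta_i)$ (zero entries skipped); output $i^*=\arg\min_i a_i$, $t^*=t_{i^*}$. The same random numbers are used for $v$. One-hot concatenation: the value $h_j\in\{0,\dots,2^b-1\}$ is encoded as the vector in $\{0,1\}^{2^b}$ with a single 1 in position $h_j$; concatenating the $k$ encodings gives a vector of length $2^b k$ with exactly $k$ ones. Count-sketch with $B$ bins of $x\in\mathbb{R}^d$: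 draw $h(1),\dots,h(d)$ i.i.d. uniform on $\{1,\dots,B\}$ and, independently, $s_1,\dots,s_d$ i.i.d. uniform on $\{-1,+1\}$; set $z_m=\sum_{i=1}^d x_i s_i 1\{h(i)=m\}$ for $m=1,\dots,B$. The sketch $w$ of $y$ uses the same $h$ and $s$. $\langle z,w\rangle=\sum_{m=1}^B z_m w_m$. *)

theory Defs
  imports "HOL-Probability.Probability"
begin

text \<open>Vectors in R^D are represented as functions nat => real, of which only the
  coordinates 1..D are relevant.\<close>

text \<open>Sign-splitting: coordinate 2i-1 carries the positive part of u_i, 2i the negative part.\<close>
definition sign_split :: "(nat \<Rightarrow> real) \<Rightarrow> nat \<Rightarrow> real" where
  "sign_split u l =
     (if odd l then (if u ((l + 1) div 2) > 0 then u ((l + 1) div 2) else 0)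
      else (if u (l div 2) \<le> 0 then - u (l div 2) else 0))"

text \<open>GCWS with one set of random numbers r, c, beta (indexed 1..2D), applied to the
  already sign-split vector ut of length 2D.\<close>
definition gcws_t :: "real \<Rightarrow> (nat \<Rightarrow> real) \<Rightarrow> (nat \<Rightarrow> real) \<Rightarrow> (nat \<Rightarrow> real) \<Rightarrow> nat \<Rightarrow> int" where
  "gcws_t p ut r beta i = \<lfloor>p * ln (ut i) / r i + beta i\<rfloor>"

definition gcws_a :: "real \<Rightarrow> (nat \<Rightarrow> real) \<Rightarrow> (nat \<Rightarrow> real) \<Rightarrow> (nat \<Rightarrow> real) \<Rightarrow> (nat \<Rightarrow> real) \<Rightarrow> nat \<Rightarrow> real" where
  "gcws_a p ut r c beta i = ln (c i) - r i * (real_of_int (gcws_t p ut r beta i) + 1 - beta i)"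

definition gcws :: "nat \<Rightarrow> real \<Rightarrow> (nat \<Rightarrow> real) \<Rightarrow> (nat \<Rightarrow> real) \<Rightarrow> (nat \<Rightarrow> real) \<Rightarrow> (nat \<Rightarrow> real) \<Rightarrow> nat \<times> int" where
  "gcws D p ut r c beta =
     (let istar = arg_min_on (gcws_a p ut r c beta) {i \<in> {1..2*D}. ut i > 0}
      in (istar, gcws_t p ut r beta istar))"

text \<open>One-hot concatenation of k values hv 1, ..., hv k in {0..2^b-1}: position l (1-based,
  1 <= l <= 2^b k) lies in block j = (l-1) div 2^b + 1 with offset (l-1) mod 2^b.\<close>
definition onehot_concat :: "nat \<Rightarrow> (nat \<Rightarrow> real) \<Rightarrow> nat \<Rightarrow> real" where
  "onehot_concat b hv l =
     (if hv ((l - 1) div 2^b + 1) = real ((l - 1) mod 2^b) then 1 else 0)"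

definition count_sketch :: "nat \<Rightarrow> (nat \<Rightarrow> real) \<Rightarrow> (nat \<Rightarrow> real) \<Rightarrow> (nat \<Rightarrow> real) \<Rightarrow> nat \<Rightarrow> real" where
  "count_sketch d h s x m = (\<Sum>l\<in>{1..d}. x l * s l * (if h l = real m then 1 else 0))"

text \<open>Tags for the primitive random variables (all real-valued):
  R j i, C j i, Bt j i (GCWS random numbers of set j, coordinate i);
  G j i t (value of the random hash g_j at (i,t)); H l, S l (count-sketch bin / sign).\<close>
datatype rtag = R nat nat | C nat nat | Bt nat nat | G nat nat int | H nat | S nat

definition rtags :: "nat \<Rightarrow> nat \<Rightarrow> nat \<Rightarrow> rtag set" where
  "rtags D k d =
     {R j i | j i. j \<in> {1..k} \<and> i \<in> {1..2*D}} \<union>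
     {C j i | j i. j \<in> {1..k} \<and> i \<in> {1..2*D}} \<union>
     {Bt j i | j i. j \<in> {1..k} \<and> i \<in> {1..2*D}} \<union>
     {G j i t | j i t. j \<in> {1..k} \<and> i \<in> {1..2*D}} \<union>
     {H l | l. l \<in> {1..d}} \<union> {S l | l. l \<in> {1..d}}"

definition hashed_gcws :: "nat \<Rightarrow> real \<Rightarrow> (rtag \<Rightarrow> 'a \<Rightarrow> real) \<Rightarrow> (nat \<Rightarrow> real) \<Rightarrow> nat \<Rightarrow> 'a \<Rightarrow> real" where
  "hashed_gcws D p X u j \<omega> =
     (let (istar, tstar) = gcws D p (sign_split u) (\<lambda>i. X (R j i) \<omega>) (\<lambda>i. X (C j i) \<omega>)
                               (\<lambda>i. X (Bt j i) \<omega>)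
      in X (G j istar tstar) \<omega>)"

end

theory Submission
  imports Defs
begin

lemma arg_min_on_cong':
  assumes "\<And>x. x \<in> SS \<Longrightarrow> f x = g x"
  shows "arg_min_on f SS = arg_min_on g SS"
  unfolding arg_min_on_def arg_min_def is_arg_min_def using assms
  by (metis (no_types, lifting))

lemma sign_split_nonempty:
  assumes "\<exists>i\<in>{1..D}. u i \<noteq> 0"
  shows "{i \<in> {1..2*D}. sign_split u i > 0} \<noteq> {}"
proof -
  obtain i where i: "i \<in> {1..D}" "u i \<noteq> 0" using assms by blast
  show ?thesis
  proof (cases "u i > 0")
    case True
    have "sign_split u (2*i - 1) = u i" using i True
      unfolding sign_split_def by (auto simp: odd_pos)
    then show ?thesis using i True by (intro ex_in_conv[THEN iffD1] exI[of _ "2*i-1"]) auto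
  next
    case False
    have "sign_split u (2*i) = - u i" using i False
      unfolding sign_split_def by auto
    then show ?thesis using i False by (intro ex_in_conv[THEN iffD1] exI[of _ "2*i"]) auto
  qed
qed

lemma gcws_cong:
  assumes ne: "{i \<in> {1..2*D}. ut i > 0} \<noteq> {}"
    and r: "\<And>i. i \<in> {1..2*D} \<Longrightarrow> r i = r' i"
    and c: "\<And>i. i \<in> {1..2*D} \<Longrightarrow> c i = c' i"
    and be: "\<And>i. i \<in> {1..2*D} \<Longrightarrow> be i = be' i"
  shows "gcws D p ut r c be = gcws D p ut r' c' be'"
proof -
  let ?S = "{i \<in> {1..2*D}. ut i > 0}"
  have eq: "arg_min_on (gcws_a p ut r c be) ?S = arg_min_on (gcws_a p ut r' c' be') ?S"
    by (rule arg_min_on_cong') (auto simp: gcws_a_def gcws_t_def r c be)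
  have "finite ?S" by auto
  then have "arg_min_on (gcws_a p ut r' c' be') ?S \<in> ?S"
    using ne by (rule arg_min_if_finite)
  then show ?thesis unfolding gcws_def Let_def eq
    by (auto simp: gcws_t_def r be)
qed

lemma gcws_fst_in:
  assumes ne: "{i \<in> {1..2*D}. ut i > 0} \<noteq> {}"
  shows "fst (gcws D p ut r c be) \<in> {i \<in> {1..2*D}. ut i > 0}"
  unfolding gcws_def Let_def using arg_min_if_finite(1)[OF _ ne] by auto

lemma measurable_arg_min_on:
  fixes f :: "'a \<Rightarrow> nat \<Rightarrow> real"
  assumes SS: "finite SS" "SS \<noteq> {}" and f: "\<And>i. i \<in> SS \<Longrightarrow> (\<lambda>\<omega>. f \<omega> i) \<in> borel_measurable M"
  shows "(\<lambda>\<omega>. arg_min_on (f \<omega>) SS) \<in> measurable M (count_space SS)"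
proof -
  define Mn where "Mn \<omega> = {x \<in> SS. \<forall>y\<in>SS. f \<omega> x \<le> f \<omega> y}" for \<omega>
  define ch where "ch T = (SOME x::nat. x \<in> T)" for T
  have eq: "arg_min_on (f \<omega>) SS = ch (Mn \<omega>)" for \<omega>
    unfolding arg_min_on_def arg_min_def is_arg_min_def ch_def Mn_def
    by (simp add: not_less Ball_def)
  have Mn: "Mn \<in> measurable M (count_space (Pow SS))"
  proof (subst measurable_count_space_eq2)
    show "finite (Pow SS)" using SS by simp
    show "Mn \<in> space M \<rightarrow> Pow SS \<and> (\<forall>a\<in>Pow SS. Mn -` {a} \<inter> space M \<in> sets M)"
    proof safe
      fix T assume T: "T \<subseteq> SS"
      have "Mn -` {T} \<inter> space M = {\<omega> \<in> space M. \<forall>x\<in>SS. (x \<in> T \<longleftrightarrow> (\<forall>y\<in>SS. f \<omega> x \<le> f \<omega> y))}"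
      proof -
        have "Mn \<omega> = T \<longleftrightarrow> (\<forall>x\<in>SS. (x \<in> T \<longleftrightarrow> (\<forall>y\<in>SS. f \<omega> x \<le> f \<omega> y)))" for \<omega>
          using T unfolding Mn_def by blast
        then show ?thesis by blast
      qed
      also have "\<dots> \<in> sets M"
        using SS f by measurable
      finally show "Mn -` {T} \<inter> space M \<in> sets M" .
    qed (auto simp: Mn_def)
  qed
  have ne: "Mn \<omega> \<noteq> {}" for \<omega>
  proof -
    have "arg_min_on (f \<omega>) SS \<in> SS" "\<not>(\<exists>x\<in>SS. f \<omega> x < f \<omega> (arg_min_on (f \<omega>) SS))"
      using arg_min_if_finite[OF SS] by blast+
    then have "arg_min_on (f \<omega>) SS \<in> Mn \<omega>" unfolding Mn_def by (auto simp: not_less)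
    then show ?thesis by blast
  qed
  have chin: "ch (Mn \<omega>) \<in> SS" for \<omega>
  proof -
    have "ch (Mn \<omega>) \<in> Mn \<omega>" using ne[of \<omega>] unfolding ch_def by (simp add: some_in_eq)
    then show ?thesis unfolding Mn_def by blast
  qed
  have ch: "ch \<in> measurable (count_space (Pow SS)) (count_space UNIV)" by simp
  have "(\<lambda>\<omega>. ch (Mn \<omega>)) \<in> measurable M (count_space UNIV)"
    using measurable_compose[OF Mn ch] by (simp add: comp_def)
  then have "(\<lambda>\<omega>. ch (Mn \<omega>)) \<in> measurable M (count_space SS)"
    unfolding measurable_count_space_eq2_countable using chin by auto
  then show ?thesis unfolding eq .
qed


lemma measurable_gcws:
  fixes r c be :: "'a \<Rightarrow> nat \<Rightarrow> real"
  assumes ne: "{i \<in> {1..2*D}. ut i > 0} \<noteq> {}"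
    and r: "\<And>i. i \<in> {1..2*D} \<Longrightarrow> (\<lambda>\<omega>. r \<omega> i) \<in> borel_measurable M"
    and c: "\<And>i. i \<in> {1..2*D} \<Longrightarrow> (\<lambda>\<omega>. c \<omega> i) \<in> borel_measurable M"
    and be: "\<And>i. i \<in> {1..2*D} \<Longrightarrow> (\<lambda>\<omega>. be \<omega> i) \<in> borel_measurable M"
  shows "(\<lambda>\<omega>. gcws D p ut (r \<omega>) (c \<omega>) (be \<omega>)) \<in> measurable M (count_space UNIV)"
proof -
  let ?S = "{i \<in> {1..2*D}. ut i > 0}"
  have ist: "(\<lambda>\<omega>. arg_min_on (gcws_a p ut (r \<omega>) (c \<omega>) (be \<omega>)) ?S) \<in> measurable M (count_space ?S)"
  proof (rule measurable_arg_min_on)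
    fix i assume i: "i \<in> ?S"
    have i': "i \<in> {1..2*D}" using i by auto
    note rr = r[OF i'] c[OF i'] be[OF i']
    have "(\<lambda>\<omega>. p * ln (ut i) / r \<omega> i + be \<omega> i) \<in> borel_measurable M" using rr by measurable
    from measurable_compose[OF this borel_measurable_real_floor]
    have fl: "(\<lambda>\<omega>. real_of_int \<lfloor>p * ln (ut i) / r \<omega> i + be \<omega> i\<rfloor>) \<in> borel_measurable M" by (simp add: comp_def)
    show "(\<lambda>\<omega>. gcws_a p ut (r \<omega>) (c \<omega>) (be \<omega>) i) \<in> borel_measurable M"
      unfolding gcws_a_def gcws_t_def using rr fl by measurable
  qed (use ne in auto)
  have pt: "(\<lambda>\<omega>. (i, gcws_t p ut (r \<omega>) (be \<omega>) i)) \<in> measurable M (count_space UNIV)" if i: "i \<in> ?S" for i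
  proof -
    have i': "i \<in> {1..2*D}" using i by auto
    note rr = r[OF i'] c[OF i'] be[OF i']
    have "(\<lambda>\<omega>. p * ln (ut i) / r \<omega> i + be \<omega> i) \<in> borel_measurable M" using rr by measurable
    from measurable_compose[OF this measurable_real_floor]
    have fl: "(\<lambda>\<omega>. \<lfloor>p * ln (ut i) / r \<omega> i + be \<omega> i\<rfloor>) \<in> measurable M (count_space UNIV)" by (simp add: comp_def)
    have "(\<lambda>\<omega>. (i, gcws_t p ut (r \<omega>) (be \<omega>) i)) \<in> measurable M (count_space UNIV \<Otimes>\<^sub>M count_space UNIV)"
      unfolding gcws_t_def using fl by measurable
    then show ?thesis by (simp add: pair_measure_countable)
  qed
  have "(\<lambda>\<omega>. (\<lambda>i. (i, gcws_t p ut (r \<omega>) (be \<omega>) i)) (arg_min_on (gcws_a p ut (r \<omega>) (c \<omega>) (be \<omega>)) ?S)) \<in> measurable M (count_space UNIV)"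
    by (rule measurable_compose_countable'[OF pt ist]) auto
  then show ?thesis unfolding gcws_def Let_def .
qed

definition Fh :: "nat \<Rightarrow> real \<Rightarrow> (nat \<Rightarrow> real) \<Rightarrow> (rtag \<Rightarrow> real) \<Rightarrow> real" where
  "Fh D p u w = hashed_gcws D p (\<lambda>t (_::unit). w t) u 1 ()"

lemma measurable_component_any:
  "(\<lambda>w. w t) \<in> borel_measurable (PiM I (\<lambda>_. borel :: real measure))"
proof (cases "t \<in> I")
  case True then show ?thesis by measurable
next
  case False
  have "(\<lambda>w. undefined :: real) \<in> borel_measurable (PiM I (\<lambda>_. borel :: real measure))" by simp
  moreover have "\<And>w. w \<in> space (PiM I (\<lambda>_. borel :: real measure)) \<Longrightarrow> undefined = w t"
    using False by (auto simp: space_PiM PiE_def extensional_def)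
  ultimately show ?thesis by (rule measurable_cong[THEN iffD1, rotated]) 
qed

lemma measurable_Fh:
  assumes ne: "{i \<in> {1..2*D}. sign_split u i > 0} \<noteq> {}"
  shows "Fh D p u \<in> borel_measurable (PiM I (\<lambda>_. borel))"
proof -
  have g: "(\<lambda>w. gcws D p (sign_split u) (\<lambda>i. w (R 1 i)) (\<lambda>i. w (C 1 i)) (\<lambda>i. w (Bt 1 i)))
      \<in> measurable (PiM I (\<lambda>_. borel)) (count_space UNIV)"
    by (rule measurable_gcws[OF ne]) (auto intro: measurable_component_any)
  have "(\<lambda>w. (\<lambda>q. w (G 1 (fst q) (snd q))) (gcws D p (sign_split u) (\<lambda>i. w (R 1 i)) (\<lambda>i. w (C 1 i)) (\<lambda>i. w (Bt 1 i))))
      \<in> borel_measurable (PiM I (\<lambda>_. borel))"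
    by (rule measurable_compose_countable[OF _ g]) (rule measurable_component_any)
  moreover have "Fh D p u = (\<lambda>w. (\<lambda>q. w (G 1 (fst q) (snd q))) (gcws D p (sign_split u) (\<lambda>i. w (R 1 i)) (\<lambda>i. w (C 1 i)) (\<lambda>i. w (Bt 1 i))))"
    by (auto simp: Fh_def hashed_gcws_def fun_eq_iff split: prod.split)
  ultimately show ?thesis by simp
qed

definition sc :: "real \<Rightarrow> real" where "sc x = (if x = 1 then 1 else -1)"
definition hc :: "nat \<Rightarrow> real \<Rightarrow> real" where "hc B x = (if x \<in> real ` {1..B} then x else 1)"
definition cc :: "nat \<Rightarrow> real \<Rightarrow> real \<Rightarrow> real" where
  "cc B a a' = (\<Sum>m\<in>{1..B}. (if a = real m then 1 else 0) * (if a' = real m then 1 else 0))"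

lemma cc_eq: "cc B a a' = (if a = a' \<and> a \<in> real ` {1..B} then 1 else 0)"
proof (cases "a = a' \<and> a \<in> real ` {1..B}")
  case True
  then obtain m where m: "m \<in> {1..B}" "a = real m" by auto
  have "cc B a a' = (\<Sum>m'\<in>{1..B}. if m' = m then 1 else 0)"
    unfolding cc_def using True m by (intro sum.cong) auto
  also have "\<dots> = 1" using m by simp
  finally have c1: "cc B a a' = 1" .
  show ?thesis by (subst if_P[OF True]) (fact c1)
next
  case False
  have "cc B a a' = (\<Sum>m'\<in>{1..B}. 0)"
    unfolding cc_def using False by (intro sum.cong) auto
  then show ?thesis using False by simp
qed

lemma sc_sq: "sc x * sc x = 1" by (simp add: sc_def)
lemma abs_sc: "\<bar>sc x\<bar> = 1" by (simp add: sc_def)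
lemma cc_01: "cc B a a' * cc B a a' = cc B a a'" by (simp add: cc_eq)
lemma abs_cc: "\<bar>cc B a a'\<bar> \<le> 1" by (simp add: cc_eq)
lemma cc_sym: "cc B a a' = cc B a' a" by (auto simp: cc_eq)
lemma hc_in: assumes "B \<ge> 1" shows "hc B x \<in> real ` {1..B}"
proof -
  have "real 1 \<in> real ` {1..B}" using assms by (intro imageI) auto
  then show ?thesis unfolding hc_def by auto
qed
lemma cc_diag: "B \<ge> 1 \<Longrightarrow> cc B (hc B x) (hc B x) = 1" using hc_in[of B x] by (simp add: cc_eq)

lemma measurable_sc[measurable]: "sc \<in> borel_measurable borel"
  unfolding sc_def by measurable
lemma measurable_hc[measurable]: "hc B \<in> borel_measurable borel"
proof -
  have "hc B = (\<lambda>x. if x \<in> real ` {1..B} then x else 1)" by (simp add: hc_def fun_eq_iff)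
  moreover have "real ` {1..B} \<in> sets borel" by (intro borel_closed finite_imp_closed) auto
  ultimately show ?thesis by simp
qed
lemma measurable_cc[measurable]: "(\<lambda>(a, a'). cc B a a') \<in> borel_measurable (borel \<Otimes>\<^sub>M borel)"
  unfolding cc_def by measurable

lemma (in prob_space) integrable_bounded:
  fixes f :: "'a \<Rightarrow> real"
  assumes "f \<in> borel_measurable M" "\<And>x. \<bar>f x\<bar> \<le> c"
  shows "integrable M f"
  using assms by (intro integrable_const_bound[where B=c]) auto

lemma (in prob_space) prob_vals_sum:
  fixes Y :: "'a \<Rightarrow> real"
  assumes Y: "random_variable borel Y" and A: "finite A"
  shows "prob {\<omega>\<in>space M. Y \<omega> \<in> A} = (\<Sum>a\<in>A. prob {\<omega>\<in>space M. Y \<omega> = a})"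
  using A
proof (induction A rule: finite_induct)
  case empty then show ?case by simp
next
  case (insert a A)
  have "{\<omega>\<in>space M. Y \<omega> \<in> insert a A} = {\<omega>\<in>space M. Y \<omega> = a} \<union> {\<omega>\<in>space M. Y \<omega> \<in> A}" by auto
  moreover have "prob ({\<omega>\<in>space M. Y \<omega> = a} \<union> {\<omega>\<in>space M. Y \<omega> \<in> A}) =
      prob {\<omega>\<in>space M. Y \<omega> = a} + prob {\<omega>\<in>space M. Y \<omega> \<in> A}"
  proof (intro finite_measure_Union)
    have "\<And>A. finite A \<Longrightarrow> {\<omega>\<in>space M. Y \<omega> \<in> A} \<in> events"
    proof -
      fix A :: "real set" assume "finite A"
      then have "A \<in> sets borel" by (intro borel_closed finite_imp_closed)
      then have "Y -` A \<inter> space M \<in> events" by (rule measurable_sets[OF Y])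
      moreover have "Y -` A \<inter> space M = {\<omega>\<in>space M. Y \<omega> \<in> A}" by auto
      ultimately show "{\<omega>\<in>space M. Y \<omega> \<in> A} \<in> events" by simp
    qed
    from this[of "{a}"] this[of A] insert show "{\<omega>\<in>space M. Y \<omega> = a} \<in> events" "{\<omega>\<in>space M. Y \<omega> \<in> A} \<in> events"
      by auto
  qed (use insert in auto)
  ultimately show ?case using insert by simp
qed

locale thm4 = prob_space M for M :: "'a measure" +
  fixes X :: "rtag \<Rightarrow> 'a \<Rightarrow> real" and D b k B d :: nat and p :: real and u v :: "nat \<Rightarrow> real"
  assumes d_def: "d = 2^b * k"
    and D: "D \<ge> 1" and kpos: "k \<ge> 1" and Bpos: "B \<ge> 1"
    and u: "\<exists>i\<in>{1..D}. u i \<noteq> 0" and v: "\<exists>i\<in>{1..D}. v i \<noteq> 0"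
    and indep: "indep_vars (\<lambda>_. borel) X (rtags D k d)"
    and distR: "\<And>j i. j \<in> {1..k} \<Longrightarrow> i \<in> {1..2*D} \<Longrightarrow>
                   distributed M lborel (X (R j i)) (erlang_density 1 1)"
    and distC: "\<And>j i. j \<in> {1..k} \<Longrightarrow> i \<in> {1..2*D} \<Longrightarrow>
                   distributed M lborel (X (C j i)) (erlang_density 1 1)"
    and distB: "\<And>j i. j \<in> {1..k} \<Longrightarrow> i \<in> {1..2*D} \<Longrightarrow>
                   distr M lborel (X (Bt j i)) = uniform_measure lborel {0..1}"
    and distG: "\<And>j i t n. j \<in> {1..k} \<Longrightarrow> i \<in> {1..2*D} \<Longrightarrow> n < 2^b \<Longrightarrow>
                   prob {\<omega> \<in> space M. X (G j i t) \<omega> = real n} = 1 / 2^b"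
    and distH: "\<And>l m. l \<in> {1..d} \<Longrightarrow> m \<in> {1..B} \<Longrightarrow>
                   prob {\<omega> \<in> space M. X (H l) \<omega> = real m} = 1 / B"
    and distS: "\<And>l. l \<in> {1..d} \<Longrightarrow>
                   prob {\<omega> \<in> space M. X (S l) \<omega> = 1} = 1 / 2 \<and>
                   prob {\<omega> \<in> space M. X (S l) \<omega> = -1} = 1 / 2"
begin

lemma rv: "t \<in> rtags D k d \<Longrightarrow> random_variable borel (X t)"
  using indep unfolding indep_vars_def by auto

lemma H_in: "l \<in> {1..d} \<Longrightarrow> H l \<in> rtags D k d" by (auto simp: rtags_def)
lemma S_in: "l \<in> {1..d} \<Longrightarrow> S l \<in> rtags D k d" by (auto simp: rtags_def)

lemma rvH[measurable]: "l \<in> {1..d} \<Longrightarrow> random_variable borel (X (H l))" using rv H_in by blast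
lemma rvS[measurable]: "l \<in> {1..d} \<Longrightarrow> random_variable borel (X (S l))" using rv S_in by blast

lemma indep_split_int:
  fixes f g :: "(rtag \<Rightarrow> real) \<Rightarrow> real"
  assumes AB: "A \<inter> Bs = {}" "A \<subseteq> rtags D k d" "Bs \<subseteq> rtags D k d"
    and f: "f \<in> borel_measurable (PiM A (\<lambda>_. borel))" "\<And>w. \<bar>f w\<bar> \<le> cf"
    and g: "g \<in> borel_measurable (PiM Bs (\<lambda>_. borel))" "\<And>w. \<bar>g w\<bar> \<le> cg"
  shows "expectation (\<lambda>\<omega>. f (restrict (\<lambda>t. X t \<omega>) A) * g (restrict (\<lambda>t. X t \<omega>) Bs)) =
         expectation (\<lambda>\<omega>. f (restrict (\<lambda>t. X t \<omega>) A)) * expectation (\<lambda>\<omega>. g (restrict (\<lambda>t. X t \<omega>) Bs))"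
    and "integrable M (\<lambda>\<omega>. f (restrict (\<lambda>t. X t \<omega>) A))"
    and "integrable M (\<lambda>\<omega>. g (restrict (\<lambda>t. X t \<omega>) Bs))"
proof -
  have iv: "indep_var (PiM A (\<lambda>_. borel)) (\<lambda>\<omega>. restrict (\<lambda>t. X t \<omega>) A) (PiM Bs (\<lambda>_. borel)) (\<lambda>\<omega>. restrict (\<lambda>t. X t \<omega>) Bs)"
    by (rule indep_var_restrict[OF indep AB])
  have mA: "(\<lambda>\<omega>. restrict (\<lambda>t. X t \<omega>) A) \<in> measurable M (PiM A (\<lambda>_. borel))"
    using AB rv by (intro measurable_restrict) auto
  have mB: "(\<lambda>\<omega>. restrict (\<lambda>t. X t \<omega>) Bs) \<in> measurable M (PiM Bs (\<lambda>_. borel))"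
    using AB rv by (intro measurable_restrict) auto
  have iv2: "indep_var borel (f \<circ> (\<lambda>\<omega>. restrict (\<lambda>t. X t \<omega>) A)) borel (g \<circ> (\<lambda>\<omega>. restrict (\<lambda>t. X t \<omega>) Bs))"
    by (rule indep_var_compose[OF iv f(1) g(1)])
  show i1: "integrable M (\<lambda>\<omega>. f (restrict (\<lambda>t. X t \<omega>) A))"
    by (rule integrable_bounded[where c=cf]) (use measurable_compose[OF mA f(1)] f(2) in auto)
  show i2: "integrable M (\<lambda>\<omega>. g (restrict (\<lambda>t. X t \<omega>) Bs))"
    by (rule integrable_bounded[where c=cg]) (use measurable_compose[OF mB g(1)] g(2) in auto)
  show "expectation (\<lambda>\<omega>. f (restrict (\<lambda>t. X t \<omega>) A) * g (restrict (\<lambda>t. X t \<omega>) Bs)) =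
         expectation (\<lambda>\<omega>. f (restrict (\<lambda>t. X t \<omega>) A)) * expectation (\<lambda>\<omega>. g (restrict (\<lambda>t. X t \<omega>) Bs))"
    using indep_var_lebesgue_integral[OF iv2] i1 i2 by (simp add: comp_def)
qed


lemma E_ind: assumes "random_variable borel Y"
  shows "expectation (\<lambda>\<omega>. if Y \<omega> = c then 1 else 0) = prob {\<omega>\<in>space M. Y \<omega> = c}"
proof -
  have "expectation (\<lambda>\<omega>. if Y \<omega> = c then 1 else 0) = expectation (indicator {\<omega>\<in>space M. Y \<omega> = c})"
    by (intro Bochner_Integration.integral_cong) (auto simp: indicator_def)
  also have "\<dots> = prob ({\<omega>\<in>space M. Y \<omega> = c} \<inter> space M)" by simp
  also have "{\<omega>\<in>space M. Y \<omega> = c} \<inter> space M = {\<omega>\<in>space M. Y \<omega> = c}" by auto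
  finally show ?thesis .
qed

lemma AE_H: assumes l: "l \<in> {1..d}" shows "AE \<omega> in M. X (H l) \<omega> \<in> real ` {1..B}"
proof -
  have "prob {\<omega>\<in>space M. X (H l) \<omega> \<in> real ` {1..B}} = (\<Sum>a\<in>real ` {1..B}. prob {\<omega>\<in>space M. X (H l) \<omega> = a})"
    using rvH[OF l] by (intro prob_vals_sum) auto
  also have "\<dots> = (\<Sum>m\<in>{1..B}. prob {\<omega>\<in>space M. X (H l) \<omega> = real m})"
    by (subst sum.reindex) (auto simp: inj_on_def)
  also have "\<dots> = (\<Sum>m\<in>{1..B}. 1 / B)" using distH[OF l] by (intro sum.cong) auto
  also have "\<dots> = 1" using Bpos by simp
  finally have "AE \<omega> in M. \<omega> \<in> {\<omega>\<in>space M. X (H l) \<omega> \<in> real ` {1..B}}" by (rule AE_prob_1)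
  then show ?thesis by auto
qed

lemma AE_S: assumes l: "l \<in> {1..d}" shows "AE \<omega> in M. X (S l) \<omega> = 1 \<or> X (S l) \<omega> = -1"
proof -
  have "prob {\<omega>\<in>space M. X (S l) \<omega> \<in> {1, -1}} = (\<Sum>a\<in>{1,-1}. prob {\<omega>\<in>space M. X (S l) \<omega> = a})"
    using rvS[OF l] by (intro prob_vals_sum) auto
  also have "\<dots> = 1" using distS[OF l] by simp
  finally have "AE \<omega> in M. \<omega> \<in> {\<omega>\<in>space M. X (S l) \<omega> \<in> {1, -1}}" by (rule AE_prob_1)
  then show ?thesis by auto
qed

lemma E_sc: assumes l: "l \<in> {1..d}" shows "expectation (\<lambda>\<omega>. sc (X (S l) \<omega>)) = 0"
proof -
  have "expectation (\<lambda>\<omega>. sc (X (S l) \<omega>)) = expectation (\<lambda>\<omega>. 2 * (if X (S l) \<omega> = 1 then 1 else 0) - 1)"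
    by (intro Bochner_Integration.integral_cong) (auto simp: sc_def)
  also have "\<dots> = 2 * expectation (\<lambda>\<omega>. if X (S l) \<omega> = 1 then 1 else 0) - 1"
  proof -
    have i: "integrable M (\<lambda>\<omega>. if X (S l) \<omega> = 1 then 1 else 0 :: real)"
      by (rule integrable_bounded[where c=1]) (use rvS[OF l] in auto)
    show ?thesis using i by (simp add: prob_space)
  qed
  also have "\<dots> = 0" using E_ind[OF rvS[OF l]] distS[OF l] by simp
  finally show ?thesis .
qed

end

lemma measurable_component_any'[measurable]:
  "(\<lambda>w. w t) \<in> borel_measurable (PiM I (\<lambda>_. borel :: real measure))"
  by (rule measurable_component_any)

definition T2s :: "nat \<Rightarrow> rtag set" where "T2s d = {H l | l. l \<in> {1..d}} \<union> {S l | l. l \<in> {1..d}}"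

definition kq :: "nat \<Rightarrow> nat \<Rightarrow> nat \<Rightarrow> (rtag \<Rightarrow> real) \<Rightarrow> real" where
  "kq B l l' w = sc (w (S l)) * sc (w (S l')) * cc B (hc B (w (H l))) (hc B (w (H l')))"

lemma abs_kq: "\<bar>kq B l l' w\<bar> \<le> 1"
  unfolding kq_def abs_mult abs_sc using abs_cc by simp

lemma measurable_kq[measurable]: "kq B l l' \<in> borel_measurable (PiM I (\<lambda>_. borel))"
  unfolding kq_def cc_def by measurable

context thm4 begin

lemma T2s_sub: "T2s d \<subseteq> rtags D k d" by (auto simp: T2s_def rtags_def)

lemma once:
  assumes e: "e \<in> {1..d}" and Bs: "Bs \<subseteq> rtags D k d" "S e \<notin> Bs"
    and g: "g \<in> borel_measurable (PiM Bs (\<lambda>_. borel))" "\<And>w. \<bar>g w\<bar> \<le> c"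
  shows "expectation (\<lambda>\<omega>. sc (X (S e) \<omega>) * g (restrict (\<lambda>t. X t \<omega>) Bs)) = 0"
proof -
  have f: "(\<lambda>w. sc (w (S e))) \<in> borel_measurable (PiM {S e} (\<lambda>_. borel))" by measurable
  have "expectation (\<lambda>\<omega>. sc (restrict (\<lambda>t. X t \<omega>) {S e} (S e)) * g (restrict (\<lambda>t. X t \<omega>) Bs)) =
        expectation (\<lambda>\<omega>. sc (restrict (\<lambda>t. X t \<omega>) {S e} (S e))) * expectation (\<lambda>\<omega>. g (restrict (\<lambda>t. X t \<omega>) Bs))"
    by (rule indep_split_int(1)[OF _ _ Bs(1) f _ g]) (use Bs e S_in abs_sc in auto)
  then show ?thesis using E_sc[OF e] by simp
qed

end

context thm4 begin

lemma E_kq: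
  assumes l: "l \<in> {1..d}" "l' \<in> {1..d}" "l \<noteq> l'"
  shows "expectation (\<lambda>\<omega>. kq B l l' (\<lambda>t. X t \<omega>)) = 0"
proof -
  define Bs where "Bs = T2s d - {S l}"
  define g where "g w = sc (w (S l')) * cc B (hc B (w (H l))) (hc B (w (H l')))" for w :: "rtag \<Rightarrow> real"
  have "expectation (\<lambda>\<omega>. sc (X (S l) \<omega>) * g (restrict (\<lambda>t. X t \<omega>) Bs)) = 0"
  proof (rule once[OF l(1)])
    show "Bs \<subseteq> rtags D k d" "S l \<notin> Bs" using T2s_sub by (auto simp: Bs_def)
    show "g \<in> borel_measurable (PiM Bs (\<lambda>_. borel))" unfolding g_def cc_def by measurable
    show "\<bar>g w\<bar> \<le> 1" for w unfolding g_def abs_mult abs_sc using abs_cc by simp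
  qed
  moreover have "sc (X (S l) \<omega>) * g (restrict (\<lambda>t. X t \<omega>) Bs) = kq B l l' (\<lambda>t. X t \<omega>)" for \<omega>
    using l unfolding g_def kq_def Bs_def T2s_def by auto
  ultimately show ?thesis by simp
qed

lemma E_cc:
  assumes l: "l1 \<in> {1..d}" "l2 \<in> {1..d}" "l1 \<noteq> l2"
  shows "expectation (\<lambda>\<omega>. cc B (hc B (X (H l1) \<omega>)) (hc B (X (H l2) \<omega>))) = 1 / B"
proof -
  have ae: "AE \<omega> in M. cc B (hc B (X (H l1) \<omega>)) (hc B (X (H l2) \<omega>)) =
     (\<Sum>m\<in>{1..B}. (if X (H l1) \<omega> = real m then 1 else 0) * (if X (H l2) \<omega> = real m then 1 else 0))"
    using AE_H[OF l(1)] AE_H[OF l(2)] by eventually_elim (simp add: hc_def cc_def)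
  have "expectation (\<lambda>\<omega>. cc B (hc B (X (H l1) \<omega>)) (hc B (X (H l2) \<omega>))) =
     expectation (\<lambda>\<omega>. \<Sum>m\<in>{1..B}. (if X (H l1) \<omega> = real m then 1 else 0) * (if X (H l2) \<omega> = real m then 1 else 0))"
    using ae by (intro integral_cong_AE) (use l in auto)
  also have "\<dots> = (\<Sum>m\<in>{1..B}. expectation (\<lambda>\<omega>. (if X (H l1) \<omega> = real m then 1 else 0) * (if X (H l2) \<omega> = real m then 1 else 0)))"
    by (rule Bochner_Integration.integral_sum) (rule integrable_bounded[where c=1], use l in auto)
  also have "\<dots> = (\<Sum>m\<in>{1..B}. (1 / B) * (1 / B))"
  proof (intro sum.cong refl)
    fix m assume m: "m \<in> {1..B}"
    define f where "f w = (if w (H l1) = real m then 1 else 0 :: real)" for w :: "rtag \<Rightarrow> real"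
    define g where "g w = (if w (H l2) = real m then 1 else 0 :: real)" for w :: "rtag \<Rightarrow> real"
    have fm: "f \<in> borel_measurable (PiM {H l1} (\<lambda>_. borel))" unfolding f_def by measurable
    have gm: "g \<in> borel_measurable (PiM {H l2} (\<lambda>_. borel))" unfolding g_def by measurable
    have "expectation (\<lambda>\<omega>. f (restrict (\<lambda>t. X t \<omega>) {H l1}) * g (restrict (\<lambda>t. X t \<omega>) {H l2})) =
          expectation (\<lambda>\<omega>. f (restrict (\<lambda>t. X t \<omega>) {H l1})) * expectation (\<lambda>\<omega>. g (restrict (\<lambda>t. X t \<omega>) {H l2}))"
      by (rule indep_split_int(1)[OF _ _ _ fm _ gm, where cf=1 and cg=1]) (use l H_in in \<open>auto simp: f_def g_def\<close>)
    moreover have "expectation (\<lambda>\<omega>. f (restrict (\<lambda>t. X t \<omega>) {H l1})) = 1 / B"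
      using E_ind[OF rvH[OF l(1)]] distH[OF l(1) m] by (simp add: f_def)
    moreover have "expectation (\<lambda>\<omega>. g (restrict (\<lambda>t. X t \<omega>) {H l2})) = 1 / B"
      using E_ind[OF rvH[OF l(2)]] distH[OF l(2) m] by (simp add: g_def)
    ultimately show "expectation (\<lambda>\<omega>. (if X (H l1) \<omega> = real m then 1 else 0) * (if X (H l2) \<omega> = real m then 1 else 0)) = (1 / B) * (1 / B)"
      by (simp add: f_def g_def)
  qed
  also have "\<dots> = 1 / B" using Bpos by (simp add: power2_eq_square)
  finally show ?thesis .
qed

lemma kappa:
  assumes l: "l1 \<in> {1..d}" "l2 \<in> {1..d}" "l3 \<in> {1..d}" "l4 \<in> {1..d}" "l1 \<noteq> l2" "l3 \<noteq> l4"
  shows "expectation (\<lambda>\<omega>. kq B l1 l2 (\<lambda>t. X t \<omega>) * kq B l3 l4 (\<lambda>t. X t \<omega>)) =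
    (if l3 = l1 \<and> l4 = l2 then 1 / B else 0) + (if l3 = l2 \<and> l4 = l1 then 1 / B else 0)"
proof -
  consider (a) "l1 \<noteq> l3 \<and> l1 \<noteq> l4" | (b) "l2 \<noteq> l3 \<and> l2 \<noteq> l4" | (c) "l3 = l1 \<and> l4 = l2" | (d) "l3 = l2 \<and> l4 = l1"
    using l by blast
  then show ?thesis
  proof cases
    case a
    define Bs where "Bs = T2s d - {S l1}"
    define g where "g w = sc (w (S l2)) * cc B (hc B (w (H l1))) (hc B (w (H l2))) * kq B l3 l4 w" for w :: "rtag \<Rightarrow> real"
    have "expectation (\<lambda>\<omega>. sc (X (S l1) \<omega>) * g (restrict (\<lambda>t. X t \<omega>) Bs)) = 0"
    proof (rule once[OF l(1)])
      show "Bs \<subseteq> rtags D k d" "S l1 \<notin> Bs" using T2s_sub by (auto simp: Bs_def)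
      show "g \<in> borel_measurable (PiM Bs (\<lambda>_. borel))" unfolding g_def cc_def by measurable
      show "\<bar>g w\<bar> \<le> 1" for w unfolding g_def abs_mult abs_sc using abs_cc[of B] abs_kq[of B l3 l4 w]
        by (simp add: mult_le_one)
    qed
    moreover have "sc (X (S l1) \<omega>) * g (restrict (\<lambda>t. X t \<omega>) Bs) = kq B l1 l2 (\<lambda>t. X t \<omega>) * kq B l3 l4 (\<lambda>t. X t \<omega>)" for \<omega>
      using l a unfolding g_def kq_def Bs_def T2s_def by auto
    ultimately show ?thesis using a by auto
  next
    case b
    define Bs where "Bs = T2s d - {S l2}"
    define g where "g w = sc (w (S l1)) * cc B (hc B (w (H l1))) (hc B (w (H l2))) * kq B l3 l4 w" for w :: "rtag \<Rightarrow> real"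
    have "expectation (\<lambda>\<omega>. sc (X (S l2) \<omega>) * g (restrict (\<lambda>t. X t \<omega>) Bs)) = 0"
    proof (rule once[OF l(2)])
      show "Bs \<subseteq> rtags D k d" "S l2 \<notin> Bs" using T2s_sub by (auto simp: Bs_def)
      show "g \<in> borel_measurable (PiM Bs (\<lambda>_. borel))" unfolding g_def cc_def by measurable
      show "\<bar>g w\<bar> \<le> 1" for w unfolding g_def abs_mult abs_sc using abs_cc[of B] abs_kq[of B l3 l4 w]
        by (simp add: mult_le_one)
    qed
    moreover have "sc (X (S l2) \<omega>) * g (restrict (\<lambda>t. X t \<omega>) Bs) = kq B l1 l2 (\<lambda>t. X t \<omega>) * kq B l3 l4 (\<lambda>t. X t \<omega>)" for \<omega>
      using l b unfolding g_def kq_def Bs_def T2s_def by auto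
    ultimately show ?thesis using b by auto
  next
    case c
    have "kq B l1 l2 (\<lambda>t. X t \<omega>) * kq B l3 l4 (\<lambda>t. X t \<omega>) = cc B (hc B (X (H l1) \<omega>)) (hc B (X (H l2) \<omega>))" for \<omega>
    proof -
      have "kq B l1 l2 (\<lambda>t. X t \<omega>) * kq B l3 l4 (\<lambda>t. X t \<omega>) =
        (sc (X (S l1) \<omega>) * sc (X (S l1) \<omega>)) * (sc (X (S l2) \<omega>) * sc (X (S l2) \<omega>)) *
        (cc B (hc B (X (H l1) \<omega>)) (hc B (X (H l2) \<omega>)) * cc B (hc B (X (H l1) \<omega>)) (hc B (X (H l2) \<omega>)))"
        using c unfolding kq_def by (simp add: algebra_simps)
      then show ?thesis by (simp only: sc_sq cc_01 mult_1)
    qed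
    then show ?thesis using E_cc[OF l(1,2,5)] c l by auto
  next
    case d
    have "kq B l1 l2 (\<lambda>t. X t \<omega>) * kq B l3 l4 (\<lambda>t. X t \<omega>) = cc B (hc B (X (H l1) \<omega>)) (hc B (X (H l2) \<omega>))" for \<omega>
    proof -
      have "kq B l1 l2 (\<lambda>t. X t \<omega>) * kq B l3 l4 (\<lambda>t. X t \<omega>) =
        (sc (X (S l1) \<omega>) * sc (X (S l1) \<omega>)) * (sc (X (S l2) \<omega>) * sc (X (S l2) \<omega>)) *
        (cc B (hc B (X (H l1) \<omega>)) (hc B (X (H l2) \<omega>)) * cc B (hc B (X (H l1) \<omega>)) (hc B (X (H l2) \<omega>)))"
        using d cc_sym[of B "hc B (X (H l2) \<omega>)"] unfolding kq_def by (simp add: algebra_simps)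
      then show ?thesis by (simp only: sc_sq cc_01 mult_1)
    qed
    then show ?thesis using E_cc[OF l(1,2,5)] d l by auto
  qed
qed

end

lemma sum_offdiag:
  fixes f :: "nat \<Rightarrow> nat \<Rightarrow> real"
  assumes "finite I"
  shows "(\<Sum>l\<in>I. \<Sum>l'\<in>I. if l = l' then 0 else f l l') = (\<Sum>l\<in>I. \<Sum>l'\<in>I. f l l') - (\<Sum>l\<in>I. f l l)"
proof -
  have "(\<Sum>l'\<in>I. if l = l' then 0 else f l l') = (\<Sum>l'\<in>I. f l l') - f l l" if "l \<in> I" for l
  proof -
    have "(\<Sum>l'\<in>I. if l = l' then 0 else f l l') = (\<Sum>l'\<in>I. f l l' - (if l = l' then f l l' else 0))"
      by (intro sum.cong) auto
    also have "\<dots> = (\<Sum>l'\<in>I. f l l') - f l l" using assms that by (simp add: sum_subtractf)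
    finally show ?thesis .
  qed
  then have "(\<Sum>l\<in>I. \<Sum>l'\<in>I. if l = l' then 0 else f l l') = (\<Sum>l\<in>I. (\<Sum>l'\<in>I. f l l') - f l l)"
    by (intro sum.cong) auto
  then show ?thesis by (simp add: sum_subtractf)
qed

lemma cs_expand:
  fixes w :: "rtag \<Rightarrow> real" and x y :: "nat \<Rightarrow> real"
  assumes B: "B \<ge> 1"
  shows "(\<Sum>m\<in>{1..B}. count_sketch d (\<lambda>l. hc B (w (H l))) (\<lambda>l. sc (w (S l))) x m *
                      count_sketch d (\<lambda>l. hc B (w (H l))) (\<lambda>l. sc (w (S l))) y m) =
    (\<Sum>l\<in>{1..d}. x l * y l) + (\<Sum>l\<in>{1..d}. \<Sum>l'\<in>{1..d}. if l = l' then 0 else x l * y l' * kq B l l' w)"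
proof -
  let ?h = "\<lambda>l. hc B (w (H l))" and ?s = "\<lambda>l. sc (w (S l))"
  have "(\<Sum>m\<in>{1..B}. count_sketch d ?h ?s x m * count_sketch d ?h ?s y m) =
     (\<Sum>m\<in>{1..B}. \<Sum>l\<in>{1..d}. \<Sum>l'\<in>{1..d}. (x l * ?s l * (if ?h l = real m then 1 else 0)) * (y l' * ?s l' * (if ?h l' = real m then 1 else 0)))"
    unfolding count_sketch_def by (simp only: sum_product)
  also have "\<dots> = (\<Sum>l\<in>{1..d}. \<Sum>m\<in>{1..B}. \<Sum>l'\<in>{1..d}. (x l * ?s l * (if ?h l = real m then 1 else 0)) * (y l' * ?s l' * (if ?h l' = real m then 1 else 0)))"
    by (rule sum.swap)
  also have "\<dots> = (\<Sum>l\<in>{1..d}. \<Sum>l'\<in>{1..d}. \<Sum>m\<in>{1..B}. (x l * ?s l * (if ?h l = real m then 1 else 0)) * (y l' * ?s l' * (if ?h l' = real m then 1 else 0)))"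
    by (rule sum.cong[OF refl], rule sum.swap)
  also have "\<dots> = (\<Sum>l\<in>{1..d}. \<Sum>l'\<in>{1..d}. x l * y l' * kq B l l' w)"
    unfolding kq_def cc_def by (intro sum.cong refl) (simp add: sum_distrib_left algebra_simps)
  also have "\<dots> = (\<Sum>l\<in>{1..d}. x l * y l * kq B l l w) + (\<Sum>l\<in>{1..d}. \<Sum>l'\<in>{1..d}. if l = l' then 0 else x l * y l' * kq B l l' w)"
    by (subst sum_offdiag) auto
  also have "(\<Sum>l\<in>{1..d}. x l * y l * kq B l l w) = (\<Sum>l\<in>{1..d}. x l * y l)"
    unfolding kq_def using B by (simp add: sc_sq cc_diag mult.assoc[symmetric] sc_sq)
  finally show ?thesis .
qed

lemma collapse4:
  fixes x y :: "nat \<Rightarrow> real" and I :: "nat set" and c :: real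
  assumes I: "finite I" and x: "\<And>l. l \<in> I \<Longrightarrow> x l * x l = x l" and y: "\<And>l. l \<in> I \<Longrightarrow> y l * y l = y l"
  shows "(\<Sum>l1\<in>I. \<Sum>l2\<in>I. \<Sum>l3\<in>I. \<Sum>l4\<in>I. if l1 = l2 then 0 else if l3 = l4 then 0 else
            x l1 * y l2 * x l3 * y l4 * ((if l3 = l1 \<and> l4 = l2 then c else 0) + (if l3 = l2 \<and> l4 = l1 then c else 0)))
       = c * ((\<Sum>l\<in>I. x l) * (\<Sum>l\<in>I. y l) - 2 * (\<Sum>l\<in>I. x l * y l) + (\<Sum>l\<in>I. x l * y l)^2)"
proof -
  have inner: "(\<Sum>l3\<in>I. \<Sum>l4\<in>I. if l3 = l4 then 0 else
            x l1 * y l2 * x l3 * y l4 * ((if l3 = l1 \<and> l4 = l2 then c else 0) + (if l3 = l2 \<and> l4 = l1 then c else 0)))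
      = c * (x l1 * y l2 + x l1 * y l1 * x l2 * y l2)" if l: "l1 \<in> I" "l2 \<in> I" "l1 \<noteq> l2" for l1 l2
  proof -
    have "(\<Sum>l3\<in>I. \<Sum>l4\<in>I. if l3 = l4 then 0 else
            x l1 * y l2 * x l3 * y l4 * ((if l3 = l1 \<and> l4 = l2 then c else 0) + (if l3 = l2 \<and> l4 = l1 then c else 0)))
      = (\<Sum>l3\<in>I. (if l3 = l1 then x l1 * y l2 * x l1 * y l2 * c else 0) + (if l3 = l2 then x l1 * y l2 * x l2 * y l1 * c else 0))"
    proof (intro sum.cong refl)
      fix l3 assume "l3 \<in> I"
      have "(\<Sum>l4\<in>I. if l3 = l4 then 0 else
            x l1 * y l2 * x l3 * y l4 * ((if l3 = l1 \<and> l4 = l2 then c else 0) + (if l3 = l2 \<and> l4 = l1 then c else 0)))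
        = (\<Sum>l4\<in>I. (if l4 = l2 then (if l3 = l1 then x l1 * y l2 * x l1 * y l2 * c else 0) else 0) +
                    (if l4 = l1 then (if l3 = l2 then x l1 * y l2 * x l2 * y l1 * c else 0) else 0))"
        using l by (intro sum.cong refl) auto
      also have "\<dots> = (if l3 = l1 then x l1 * y l2 * x l1 * y l2 * c else 0) + (if l3 = l2 then x l1 * y l2 * x l2 * y l1 * c else 0)"
        using l I by (simp add: sum.distrib)
      finally show "(\<Sum>l4\<in>I. if l3 = l4 then 0 else
            x l1 * y l2 * x l3 * y l4 * ((if l3 = l1 \<and> l4 = l2 then c else 0) + (if l3 = l2 \<and> l4 = l1 then c else 0)))
        = (if l3 = l1 then x l1 * y l2 * x l1 * y l2 * c else 0) + (if l3 = l2 then x l1 * y l2 * x l2 * y l1 * c else 0)" .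
    qed
    also have "\<dots> = x l1 * y l2 * x l1 * y l2 * c + x l1 * y l2 * x l2 * y l1 * c"
      using l I by (simp add: sum.distrib)
    also have "x l1 * y l2 * x l1 * y l2 = x l1 * y l2"
      using x[OF l(1)] y[OF l(2)] by (metis mult.commute mult.left_commute)
    finally show ?thesis by (simp add: algebra_simps)
  qed
  have "(\<Sum>l1\<in>I. \<Sum>l2\<in>I. \<Sum>l3\<in>I. \<Sum>l4\<in>I. if l1 = l2 then 0 else if l3 = l4 then 0 else
            x l1 * y l2 * x l3 * y l4 * ((if l3 = l1 \<and> l4 = l2 then c else 0) + (if l3 = l2 \<and> l4 = l1 then c else 0)))
     = (\<Sum>l1\<in>I. \<Sum>l2\<in>I. if l1 = l2 then 0 else c * (x l1 * y l2 + x l1 * y l1 * x l2 * y l2))"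
    using inner by (intro sum.cong refl) auto
  also have "\<dots> = (\<Sum>l1\<in>I. \<Sum>l2\<in>I. c * (x l1 * y l2 + x l1 * y l1 * x l2 * y l2)) - (\<Sum>l\<in>I. c * (x l * y l + x l * y l * x l * y l))"
    using I by (rule sum_offdiag)
  also have "(\<Sum>l\<in>I. c * (x l * y l + x l * y l * x l * y l)) = c * (2 * (\<Sum>l\<in>I. x l * y l))"
  proof -
    have "(\<Sum>l\<in>I. c * (x l * y l + x l * y l * x l * y l)) = (\<Sum>l\<in>I. c * (2 * (x l * y l)))"
    proof (intro sum.cong refl)
      fix l assume l: "l \<in> I"
      have "x l * y l * x l * y l = (x l * x l) * (y l * y l)" by (simp add: algebra_simps)
      then show "c * (x l * y l + x l * y l * x l * y l) = c * (2 * (x l * y l))" using x[OF l] y[OF l] by simp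
    qed
    then show ?thesis by (simp add: sum_distrib_left)
  qed
  also have "(\<Sum>l1\<in>I. \<Sum>l2\<in>I. c * (x l1 * y l2 + x l1 * y l1 * x l2 * y l2)) =
      c * ((\<Sum>l\<in>I. x l) * (\<Sum>l\<in>I. y l) + (\<Sum>l\<in>I. x l * y l)^2)"
  proof -
    have e1: "(\<Sum>l1\<in>I. \<Sum>l2\<in>I. c * (x l1 * y l2)) = c * ((\<Sum>l\<in>I. x l) * (\<Sum>l\<in>I. y l))"
      unfolding sum_product by (simp only: sum_distrib_left)
    have e2: "(\<Sum>l1\<in>I. \<Sum>l2\<in>I. c * (x l1 * y l1 * (x l2 * y l2))) = c * ((\<Sum>l\<in>I. x l * y l) * (\<Sum>l\<in>I. x l * y l))"
      unfolding sum_product by (simp only: sum_distrib_left)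
    have "(\<Sum>l1\<in>I. \<Sum>l2\<in>I. c * (x l1 * y l2 + x l1 * y l1 * x l2 * y l2)) =
       (\<Sum>l1\<in>I. \<Sum>l2\<in>I. c * (x l1 * y l2)) + (\<Sum>l1\<in>I. \<Sum>l2\<in>I. c * (x l1 * y l1 * (x l2 * y l2)))"
      by (simp add: sum.distrib distrib_left mult.assoc)
    then show ?thesis using e1 e2 by (simp add: power2_eq_square distrib_left)
  qed
  finally show ?thesis by (simp add: algebra_simps)
qed

lemma abs01: "(z::real) = 0 \<or> z = 1 \<Longrightarrow> \<bar>z\<bar> \<le> 1" by auto

context thm4 begin

lemma kq_V2:
  assumes "l \<in> {1..d}" "l' \<in> {1..d}"
  shows "kq B l l' (restrict (\<lambda>t. X t \<omega>) (T2s d)) = kq B l l' (\<lambda>t. X t \<omega>)"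
  using assms by (auto simp: kq_def T2s_def)

lemma int_fg:
  fixes f g :: "(rtag \<Rightarrow> real) \<Rightarrow> real"
  assumes A: "A \<subseteq> rtags D k d" "A \<inter> T2s d = {}"
    and f: "f \<in> borel_measurable (PiM A (\<lambda>_. borel))" "\<And>w. \<bar>f w\<bar> \<le> cf"
    and g: "g \<in> borel_measurable (PiM (T2s d) (\<lambda>_. borel))" "\<And>w. \<bar>g w\<bar> \<le> cg"
  shows "expectation (\<lambda>\<omega>. f (restrict (\<lambda>t. X t \<omega>) A) * g (restrict (\<lambda>t. X t \<omega>) (T2s d))) =
         expectation (\<lambda>\<omega>. f (restrict (\<lambda>t. X t \<omega>) A)) * expectation (\<lambda>\<omega>. g (restrict (\<lambda>t. X t \<omega>) (T2s d)))"
    and "integrable M (\<lambda>\<omega>. f (restrict (\<lambda>t. X t \<omega>) A) * g (restrict (\<lambda>t. X t \<omega>) (T2s d)))"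
    and "integrable M (\<lambda>\<omega>. f (restrict (\<lambda>t. X t \<omega>) A))"
proof -
  note r = indep_split_int[OF A(2) A(1) T2s_sub f g]
  show "expectation (\<lambda>\<omega>. f (restrict (\<lambda>t. X t \<omega>) A) * g (restrict (\<lambda>t. X t \<omega>) (T2s d))) =
         expectation (\<lambda>\<omega>. f (restrict (\<lambda>t. X t \<omega>) A)) * expectation (\<lambda>\<omega>. g (restrict (\<lambda>t. X t \<omega>) (T2s d)))"
    by (rule r(1))
  show "integrable M (\<lambda>\<omega>. f (restrict (\<lambda>t. X t \<omega>) A))" by (rule r(2))
  have mA: "(\<lambda>\<omega>. restrict (\<lambda>t. X t \<omega>) A) \<in> measurable M (PiM A (\<lambda>_. borel))"
    using A rv by (intro measurable_restrict) auto
  have mB: "(\<lambda>\<omega>. restrict (\<lambda>t. X t \<omega>) (T2s d)) \<in> measurable M (PiM (T2s d) (\<lambda>_. borel))"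
    using T2s_sub rv by (intro measurable_restrict) auto
  show "integrable M (\<lambda>\<omega>. f (restrict (\<lambda>t. X t \<omega>) A) * g (restrict (\<lambda>t. X t \<omega>) (T2s d)))"
  proof (rule integrable_bounded[where c="cf * cg"])
    show "(\<lambda>\<omega>. f (restrict (\<lambda>t. X t \<omega>) A) * g (restrict (\<lambda>t. X t \<omega>) (T2s d))) \<in> borel_measurable M"
      using measurable_compose[OF mA f(1)] measurable_compose[OF mB g(1)] by (simp add: comp_def)
    show "\<bar>f (restrict (\<lambda>t. X t \<omega>) A) * g (restrict (\<lambda>t. X t \<omega>) (T2s d))\<bar> \<le> cf * cg" for \<omega>
      unfolding abs_mult using f(2) g(2) by (intro mult_mono) (auto intro: order_trans[OF abs_ge_zero])
  qed
qed

lemma cs_cong: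
  assumes "\<And>l. l \<in> {1..d'} \<Longrightarrow> h l = h' l" "\<And>l. l \<in> {1..d'} \<Longrightarrow> s l = s' l"
  shows "count_sketch d' h s x m = count_sketch d' h' s' x m"
  unfolding count_sketch_def using assms by (intro sum.cong) auto

end

definition ZZ :: "nat \<Rightarrow> nat \<Rightarrow> (rtag \<Rightarrow> real) \<Rightarrow> (nat \<Rightarrow> real) \<Rightarrow> (nat \<Rightarrow> real) \<Rightarrow> real" where
  "ZZ B d w x y = (\<Sum>m\<in>{1..B}. count_sketch d (\<lambda>l. hc B (w (H l))) (\<lambda>l. sc (w (S l))) x m *
                               count_sketch d (\<lambda>l. hc B (w (H l))) (\<lambda>l. sc (w (S l))) y m)"
definition dotp :: "nat \<Rightarrow> (nat \<Rightarrow> real) \<Rightarrow> (nat \<Rightarrow> real) \<Rightarrow> real" where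
  "dotp d x y = (\<Sum>l\<in>{1..d}. x l * y l)"
definition ssum :: "nat \<Rightarrow> (nat \<Rightarrow> real) \<Rightarrow> real" where
  "ssum d x = (\<Sum>l\<in>{1..d}. x l)"

lemma bnd1: "\<bar>a::real\<bar> \<le> 1 \<Longrightarrow> \<bar>b\<bar> \<le> 1 \<Longrightarrow> \<bar>a * b\<bar> \<le> 1"
  unfolding abs_mult by (rule mult_le_one) auto

lemma abs_dotp:
  assumes "\<And>l. \<bar>x l\<bar> \<le> 1" "\<And>l. \<bar>y l\<bar> \<le> 1"
  shows "\<bar>dotp d x y\<bar> \<le> d"
proof -
  have "\<bar>dotp d x y\<bar> \<le> (\<Sum>l\<in>{1..d}. \<bar>x l * y l\<bar>)" unfolding dotp_def by (rule sum_abs)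
  also have "\<dots> \<le> (\<Sum>l\<in>{1..d}. 1)" using assms by (intro sum_mono bnd1) auto
  finally show ?thesis by simp
qed

context thm4 begin

lemma ZZ_expand:
  "ZZ B d (\<lambda>t. X t \<omega>) x y = dotp d x y +
     (\<Sum>l\<in>{1..d}. \<Sum>l'\<in>{1..d}. if l = l' then 0 else x l * y l' * kq B l l' (restrict (\<lambda>t. X t \<omega>) (T2s d)))"
proof -
  have "ZZ B d (\<lambda>t. X t \<omega>) x y = ZZ B d (restrict (\<lambda>t. X t \<omega>) (T2s d)) x y"
    unfolding ZZ_def
    by (intro sum.cong refl arg_cong2[where f="(*)"] cs_cong) (auto simp: T2s_def)
  also have "\<dots> = dotp d x y +
     (\<Sum>l\<in>{1..d}. \<Sum>l'\<in>{1..d}. if l = l' then 0 else x l * y l' * kq B l l' (restrict (\<lambda>t. X t \<omega>) (T2s d)))"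
    unfolding ZZ_def dotp_def using Bpos by (rule cs_expand)
  finally show ?thesis .
qed

end

context thm4 begin

lemma moment1:
  fixes A :: "rtag set" and phi :: "(rtag \<Rightarrow> real) \<Rightarrow> real" and xv yv :: "(rtag \<Rightarrow> real) \<Rightarrow> nat \<Rightarrow> real"
  assumes A: "A \<subseteq> rtags D k d" "A \<inter> T2s d = {}"
    and phi: "phi \<in> borel_measurable (PiM A (\<lambda>_. borel))" "\<And>w. \<bar>phi w\<bar> \<le> 1"
    and xm: "\<And>l. (\<lambda>w. xv w l) \<in> borel_measurable (PiM A (\<lambda>_. borel))" and x01: "\<And>w l. xv w l = 0 \<or> xv w l = 1"
    and ym: "\<And>l. (\<lambda>w. yv w l) \<in> borel_measurable (PiM A (\<lambda>_. borel))" and y01: "\<And>w l. yv w l = 0 \<or> yv w l = 1"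
  shows "expectation (\<lambda>\<omega>. phi (restrict (\<lambda>t. X t \<omega>) A) *
            ZZ B d (\<lambda>t. X t \<omega>) (xv (restrict (\<lambda>t. X t \<omega>) A)) (yv (restrict (\<lambda>t. X t \<omega>) A))) =
         expectation (\<lambda>\<omega>. phi (restrict (\<lambda>t. X t \<omega>) A) *
            dotp d (xv (restrict (\<lambda>t. X t \<omega>) A)) (yv (restrict (\<lambda>t. X t \<omega>) A)))"
proof -
  define VA where "VA \<omega> = restrict (\<lambda>t. X t \<omega>) A" for \<omega>
  define V2 where "V2 \<omega> = restrict (\<lambda>t. X t \<omega>) (T2s d)" for \<omega>
  define fx where "fx l l' w = phi w * xv w l * yv w l'" for l l' w
  define F where "F l l' \<omega> = (if l = l' then 0 else fx l l' (VA \<omega>) * kq B l l' (V2 \<omega>))" for l l' \<omega>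
  have xb: "\<bar>xv w l\<bar> \<le> 1" "\<bar>yv w l\<bar> \<le> 1" for w l using x01[of w l] y01[of w l] by auto
  have fxm: "fx l l' \<in> borel_measurable (PiM A (\<lambda>_. borel))" for l l'
    unfolding fx_def using phi(1) xm ym by measurable
  have fxb: "\<bar>fx l l' w\<bar> \<le> 1" for l l' w unfolding fx_def using phi(2) xb by (intro bnd1) auto
  have kqm: "kq B l l' \<in> borel_measurable (PiM (T2s d) (\<lambda>_. borel))" for l l' by measurable
  have Fint: "integrable M (F l l')" for l l'
    unfolding F_def VA_def V2_def using int_fg(2)[OF A fxm[of l l'] fxb kqm[of l l'] abs_kq] by (cases "l = l'") auto
  have FE: "expectation (F l l') = 0" if l: "l \<in> {1..d}" "l' \<in> {1..d}" for l l'
  proof (cases "l = l'")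
    case False
    have "expectation (F l l') = expectation (\<lambda>\<omega>. fx l l' (VA \<omega>)) * expectation (\<lambda>\<omega>. kq B l l' (V2 \<omega>))"
      unfolding F_def VA_def V2_def using False int_fg(1)[OF A fxm fxb kqm abs_kq] by simp
    also have "expectation (\<lambda>\<omega>. kq B l l' (V2 \<omega>)) = 0"
      unfolding V2_def kq_V2[OF l] using E_kq[OF l False] .
    finally show ?thesis by simp
  qed (simp add: F_def[abs_def])
  define fa where "fa w = phi w * dotp d (xv w) (yv w)" for w
  have fam: "fa \<in> borel_measurable (PiM A (\<lambda>_. borel))"
    unfolding fa_def dotp_def using phi(1) xm ym by measurable
  have fab: "\<bar>fa w\<bar> \<le> d" for w
  proof -
    have dd: "\<bar>dotp d (xv w) (yv w)\<bar> \<le> real d" using abs_dotp[of "xv w" "yv w" d] xb by auto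
    have "\<bar>fa w\<bar> \<le> 1 * real d" unfolding fa_def abs_mult
      using phi(2)[of w] dd by (intro mult_mono) auto
    then show ?thesis by simp
  qed
  have faint: "integrable M (\<lambda>\<omega>. fa (VA \<omega>))"
    unfolding VA_def using int_fg(3)[OF A fam fab kqm abs_kq] .
  have pw: "phi (VA \<omega>) * ZZ B d (\<lambda>t. X t \<omega>) (xv (VA \<omega>)) (yv (VA \<omega>)) =
            fa (VA \<omega>) + (\<Sum>l\<in>{1..d}. \<Sum>l'\<in>{1..d}. F l l' \<omega>)" for \<omega>
    unfolding ZZ_expand fa_def F_def fx_def V2_def distrib_left sum_distrib_left
    by (intro arg_cong2[where f="(+)"] refl sum.cong) (auto simp: algebra_simps)
  have "expectation (\<lambda>\<omega>. phi (VA \<omega>) * ZZ B d (\<lambda>t. X t \<omega>) (xv (VA \<omega>)) (yv (VA \<omega>))) =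
        expectation (\<lambda>\<omega>. fa (VA \<omega>) + (\<Sum>l\<in>{1..d}. \<Sum>l'\<in>{1..d}. F l l' \<omega>))"
    unfolding pw ..
  also have "\<dots> = expectation (\<lambda>\<omega>. fa (VA \<omega>)) + (\<Sum>l\<in>{1..d}. \<Sum>l'\<in>{1..d}. expectation (F l l'))"
    using faint Fint by (simp add: Bochner_Integration.integral_sum)
  also have "(\<Sum>l\<in>{1..d}. \<Sum>l'\<in>{1..d}. expectation (F l l')) = 0"
    using FE by simp
  finally show ?thesis by (simp only: VA_def fa_def add_0_right)
qed

end

lemma sq_sum4:
  fixes f :: "nat \<Rightarrow> nat \<Rightarrow> real"
  shows "(\<Sum>i\<in>I. \<Sum>j\<in>I. f i j) * (\<Sum>i\<in>I. \<Sum>j\<in>I. f i j) = (\<Sum>i\<in>I. \<Sum>j\<in>I. \<Sum>k\<in>I. \<Sum>l\<in>I. f i j * f k l)"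
proof -
  have "(\<Sum>i\<in>I. \<Sum>j\<in>I. f i j) * (\<Sum>i\<in>I. \<Sum>j\<in>I. f i j) = (\<Sum>i\<in>I. \<Sum>k\<in>I. (\<Sum>j\<in>I. f i j) * (\<Sum>l\<in>I. f k l))"
    by (rule sum_product)
  also have "\<dots> = (\<Sum>i\<in>I. \<Sum>k\<in>I. \<Sum>j\<in>I. \<Sum>l\<in>I. f i j * f k l)"
    by (simp only: sum_product)
  also have "\<dots> = (\<Sum>i\<in>I. \<Sum>j\<in>I. \<Sum>k\<in>I. \<Sum>l\<in>I. f i j * f k l)"
    by (rule sum.cong[OF refl], rule sum.swap)
  finally show ?thesis .
qed

context thm4 begin

lemma moment2:
  fixes A :: "rtag set" and phi :: "(rtag \<Rightarrow> real) \<Rightarrow> real" and xv yv :: "(rtag \<Rightarrow> real) \<Rightarrow> nat \<Rightarrow> real"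
  assumes A: "A \<subseteq> rtags D k d" "A \<inter> T2s d = {}"
    and phi: "phi \<in> borel_measurable (PiM A (\<lambda>_. borel))" "\<And>w. \<bar>phi w\<bar> \<le> 1"
    and xm: "\<And>l. (\<lambda>w. xv w l) \<in> borel_measurable (PiM A (\<lambda>_. borel))" and x01: "\<And>w l. xv w l = 0 \<or> xv w l = 1"
    and ym: "\<And>l. (\<lambda>w. yv w l) \<in> borel_measurable (PiM A (\<lambda>_. borel))" and y01: "\<And>w l. yv w l = 0 \<or> yv w l = 1"
  shows "expectation (\<lambda>\<omega>. phi (restrict (\<lambda>t. X t \<omega>) A) *
            (ZZ B d (\<lambda>t. X t \<omega>) (xv (restrict (\<lambda>t. X t \<omega>) A)) (yv (restrict (\<lambda>t. X t \<omega>) A)))^2) =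
         expectation (\<lambda>\<omega>. phi (restrict (\<lambda>t. X t \<omega>) A) *
            ((dotp d (xv (restrict (\<lambda>t. X t \<omega>) A)) (yv (restrict (\<lambda>t. X t \<omega>) A)))^2 +
             (ssum d (xv (restrict (\<lambda>t. X t \<omega>) A)) * ssum d (yv (restrict (\<lambda>t. X t \<omega>) A))
              - 2 * dotp d (xv (restrict (\<lambda>t. X t \<omega>) A)) (yv (restrict (\<lambda>t. X t \<omega>) A))
              + (dotp d (xv (restrict (\<lambda>t. X t \<omega>) A)) (yv (restrict (\<lambda>t. X t \<omega>) A)))^2) / B))"
proof -
  define VA where "VA \<omega> = restrict (\<lambda>t. X t \<omega>) A" for \<omega>
  define V2 where "V2 \<omega> = restrict (\<lambda>t. X t \<omega>) (T2s d)" for \<omega>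
  have xb: "\<bar>xv w l\<bar> \<le> 1" "\<bar>yv w l\<bar> \<le> 1" for w l using x01[of w l] y01[of w l] by auto
  have dd: "\<bar>dotp d (xv w) (yv w)\<bar> \<le> real d" for w using abs_dotp[of "xv w" "yv w" d] xb by auto
  have kqm: "kq B l l' \<in> borel_measurable (PiM (T2s d) (\<lambda>_. borel))" for l l' by measurable
  define fa2 where "fa2 w = phi w * (dotp d (xv w) (yv w))^2" for w
  define fx2 where "fx2 l l' w = 2 * (phi w * dotp d (xv w) (yv w) * xv w l * yv w l')" for l l' w
  define fx4 where "fx4 l1 l2 l3 l4 w = phi w * xv w l1 * yv w l2 * xv w l3 * yv w l4" for l1 l2 l3 l4 w
  define kk where "kk l1 l2 l3 l4 w = kq B l1 l2 w * kq B l3 l4 w" for l1 l2 l3 l4 w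
  define F2 where "F2 l l' \<omega> = (if l = l' then 0 else fx2 l l' (VA \<omega>) * kq B l l' (V2 \<omega>))" for l l' \<omega>
  define F4 where "F4 l1 l2 l3 l4 \<omega> = (if l1 = l2 then 0 else if l3 = l4 then 0 else fx4 l1 l2 l3 l4 (VA \<omega>) * kk l1 l2 l3 l4 (V2 \<omega>))"
    for l1 l2 l3 l4 \<omega>
  define kap where "kap l1 l2 l3 l4 = (if l3 = l1 \<and> l4 = l2 then 1 / real B else 0) + (if l3 = l2 \<and> l4 = l1 then 1 / real B else 0)"
    for l1 l2 l3 l4 :: nat
  define G4 where "G4 l1 l2 l3 l4 \<omega> = (if l1 = l2 then 0 else if l3 = l4 then 0 else fx4 l1 l2 l3 l4 (VA \<omega>) * kap l1 l2 l3 l4)"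
    for l1 l2 l3 l4 \<omega>
  have fa2m: "fa2 \<in> borel_measurable (PiM A (\<lambda>_. borel))" unfolding fa2_def dotp_def using phi(1) xm ym by measurable
  have fx2m: "fx2 l l' \<in> borel_measurable (PiM A (\<lambda>_. borel))" for l l' unfolding fx2_def dotp_def using phi(1) xm ym by measurable
  have fx4m: "fx4 l1 l2 l3 l4 \<in> borel_measurable (PiM A (\<lambda>_. borel))" for l1 l2 l3 l4 unfolding fx4_def using phi(1) xm ym by measurable
  have kkm: "kk l1 l2 l3 l4 \<in> borel_measurable (PiM (T2s d) (\<lambda>_. borel))" for l1 l2 l3 l4 unfolding kk_def by measurable
  have fa2b: "\<bar>fa2 w\<bar> \<le> real d * real d" for w
  proof -
    have "\<bar>fa2 w\<bar> \<le> 1 * (real d * real d)" unfolding fa2_def abs_mult power2_eq_square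
      using phi(2)[of w] dd[of w] by (intro mult_mono) (auto intro: mult_mono)
    then show ?thesis by simp
  qed
  have fx2b: "\<bar>fx2 l l' w\<bar> \<le> 2 * real d" for l l' w
  proof -
    have "\<bar>phi w * dotp d (xv w) (yv w)\<bar> \<le> 1 * real d" unfolding abs_mult
      using phi(2)[of w] dd[of w] by (intro mult_mono) auto
    moreover have "\<bar>xv w l * yv w l'\<bar> \<le> 1" using xb by (intro bnd1)
    ultimately have "\<bar>phi w * dotp d (xv w) (yv w) * (xv w l * yv w l')\<bar> \<le> real d * 1"
      unfolding abs_mult[of "phi w * dotp d (xv w) (yv w)"] by (intro mult_mono) auto
    then show ?thesis unfolding fx2_def by (simp add: mult.assoc)
  qed
  have fx4b: "\<bar>fx4 l1 l2 l3 l4 w\<bar> \<le> 1" for l1 l2 l3 l4 w unfolding fx4_def using phi(2) xb by (intro bnd1) auto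
  have kkb: "\<bar>kk l1 l2 l3 l4 w\<bar> \<le> 1" for l1 l2 l3 l4 w unfolding kk_def using abs_kq by (intro bnd1)
  have fa2int: "integrable M (\<lambda>\<omega>. fa2 (VA \<omega>))" unfolding VA_def using int_fg(3)[OF A fa2m fa2b kqm abs_kq] .
  have F2int: "integrable M (F2 l l')" for l l'
    unfolding F2_def VA_def V2_def using int_fg(2)[OF A fx2m[of l l'] fx2b kqm[of l l'] abs_kq] by (cases "l = l'") auto
  have F4int: "integrable M (F4 l1 l2 l3 l4)" for l1 l2 l3 l4
    unfolding F4_def VA_def V2_def using int_fg(2)[OF A fx4m[of l1 l2 l3 l4] fx4b kkm[of l1 l2 l3 l4] kkb] by (cases "l1 = l2"; cases "l3 = l4") auto
  have fx4int: "integrable M (\<lambda>\<omega>. fx4 l1 l2 l3 l4 (VA \<omega>))" for l1 l2 l3 l4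
    unfolding VA_def using int_fg(3)[OF A fx4m[of l1 l2 l3 l4] fx4b kkm[of l1 l2 l3 l4] kkb] .
  have G4int: "integrable M (G4 l1 l2 l3 l4)" for l1 l2 l3 l4
    unfolding G4_def using fx4int[of l1 l2 l3 l4] by (cases "l1 = l2"; cases "l3 = l4") auto
  have F2E: "expectation (F2 l l') = 0" if l: "l \<in> {1..d}" "l' \<in> {1..d}" for l l'
  proof (cases "l = l'")
    case False
    have "expectation (F2 l l') = expectation (\<lambda>\<omega>. fx2 l l' (VA \<omega>)) * expectation (\<lambda>\<omega>. kq B l l' (V2 \<omega>))"
      unfolding F2_def VA_def V2_def using False int_fg(1)[OF A fx2m fx2b kqm abs_kq] by simp
    also have "expectation (\<lambda>\<omega>. kq B l l' (V2 \<omega>)) = 0"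
      unfolding V2_def kq_V2[OF l] using E_kq[OF l False] .
    finally show ?thesis by simp
  qed (simp add: F2_def[abs_def])
  have F4E: "expectation (F4 l1 l2 l3 l4) = expectation (G4 l1 l2 l3 l4)"
    if l: "l1 \<in> {1..d}" "l2 \<in> {1..d}" "l3 \<in> {1..d}" "l4 \<in> {1..d}" for l1 l2 l3 l4
  proof (cases "l1 = l2 \<or> l3 = l4")
    case False
    have "expectation (F4 l1 l2 l3 l4) = expectation (\<lambda>\<omega>. fx4 l1 l2 l3 l4 (VA \<omega>)) * expectation (\<lambda>\<omega>. kk l1 l2 l3 l4 (V2 \<omega>))"
      unfolding F4_def VA_def V2_def using False int_fg(1)[OF A fx4m fx4b kkm kkb] by simp
    also have "expectation (\<lambda>\<omega>. kk l1 l2 l3 l4 (V2 \<omega>)) = kap l1 l2 l3 l4"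
      unfolding V2_def kk_def kq_V2[OF l(1,2)] kq_V2[OF l(3,4)] kap_def using kappa[OF l] False by simp
    also have "expectation (\<lambda>\<omega>. fx4 l1 l2 l3 l4 (VA \<omega>)) * kap l1 l2 l3 l4 = expectation (G4 l1 l2 l3 l4)"
      unfolding G4_def using False by simp
    finally show ?thesis .
  qed (cases "l1 = l2"; auto simp: F4_def[abs_def] G4_def[abs_def])
  have pwL: "phi (VA \<omega>) * (ZZ B d (\<lambda>t. X t \<omega>) (xv (VA \<omega>)) (yv (VA \<omega>)))^2 =
      fa2 (VA \<omega>) + (\<Sum>l\<in>{1..d}. \<Sum>l'\<in>{1..d}. F2 l l' \<omega>) +
      (\<Sum>l1\<in>{1..d}. \<Sum>l2\<in>{1..d}. \<Sum>l3\<in>{1..d}. \<Sum>l4\<in>{1..d}. F4 l1 l2 l3 l4 \<omega>)" for \<omega>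
  proof -
    define t where "t l l' = (if l = l' then 0 else xv (VA \<omega>) l * yv (VA \<omega>) l' * kq B l l' (V2 \<omega>))" for l l'
    define a where "a = dotp d (xv (VA \<omega>)) (yv (VA \<omega>))"
    define T where "T = (\<Sum>l\<in>{1..d}. \<Sum>l'\<in>{1..d}. t l l')"
    have ZT: "ZZ B d (\<lambda>t. X t \<omega>) (xv (VA \<omega>)) (yv (VA \<omega>)) = a + T"
      unfolding ZZ_expand a_def T_def t_def V2_def ..
    have e1: "2 * phi (VA \<omega>) * a * T = (\<Sum>l\<in>{1..d}. \<Sum>l'\<in>{1..d}. F2 l l' \<omega>)"
      unfolding T_def sum_distrib_left F2_def t_def fx2_def a_def
      by (intro sum.cong refl) (auto simp: algebra_simps)
    have e2: "phi (VA \<omega>) * (T * T) = (\<Sum>l1\<in>{1..d}. \<Sum>l2\<in>{1..d}. \<Sum>l3\<in>{1..d}. \<Sum>l4\<in>{1..d}. F4 l1 l2 l3 l4 \<omega>)"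
    proof -
      have "T * T = (\<Sum>l1\<in>{1..d}. \<Sum>l2\<in>{1..d}. \<Sum>l3\<in>{1..d}. \<Sum>l4\<in>{1..d}. t l1 l2 * t l3 l4)"
        unfolding T_def by (rule sq_sum4)
      then have "phi (VA \<omega>) * (T * T) = phi (VA \<omega>) * (\<Sum>l1\<in>{1..d}. \<Sum>l2\<in>{1..d}. \<Sum>l3\<in>{1..d}. \<Sum>l4\<in>{1..d}. t l1 l2 * t l3 l4)"
        by simp
      also have "\<dots> = (\<Sum>l1\<in>{1..d}. \<Sum>l2\<in>{1..d}. \<Sum>l3\<in>{1..d}. \<Sum>l4\<in>{1..d}. F4 l1 l2 l3 l4 \<omega>)"
        unfolding sum_distrib_left F4_def t_def fx4_def kk_def
        by (intro sum.cong refl) (auto simp: algebra_simps)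
      finally show ?thesis .
    qed
    show ?thesis unfolding ZT e1[symmetric] e2[symmetric] fa2_def a_def[symmetric]
      by (simp add: power2_eq_square algebra_simps)
  qed
  have pwR: "phi (VA \<omega>) * ((dotp d (xv (VA \<omega>)) (yv (VA \<omega>)))^2 +
             (ssum d (xv (VA \<omega>)) * ssum d (yv (VA \<omega>)) - 2 * dotp d (xv (VA \<omega>)) (yv (VA \<omega>))
              + (dotp d (xv (VA \<omega>)) (yv (VA \<omega>)))^2) / B) =
      fa2 (VA \<omega>) + (\<Sum>l1\<in>{1..d}. \<Sum>l2\<in>{1..d}. \<Sum>l3\<in>{1..d}. \<Sum>l4\<in>{1..d}. G4 l1 l2 l3 l4 \<omega>)" for \<omega>
  proof -
    have c4: "(\<Sum>l1\<in>{1..d}. \<Sum>l2\<in>{1..d}. \<Sum>l3\<in>{1..d}. \<Sum>l4\<in>{1..d}. if l1 = l2 then 0 else if l3 = l4 then 0 else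
            xv (VA \<omega>) l1 * yv (VA \<omega>) l2 * xv (VA \<omega>) l3 * yv (VA \<omega>) l4 * kap l1 l2 l3 l4)
       = (1 / real B) * ((\<Sum>l\<in>{1..d}. xv (VA \<omega>) l) * (\<Sum>l\<in>{1..d}. yv (VA \<omega>) l) - 2 * (\<Sum>l\<in>{1..d}. xv (VA \<omega>) l * yv (VA \<omega>) l) + (\<Sum>l\<in>{1..d}. xv (VA \<omega>) l * yv (VA \<omega>) l)^2)"
      unfolding kap_def by (rule collapse4) (use x01 y01 in auto)
    have "(\<Sum>l1\<in>{1..d}. \<Sum>l2\<in>{1..d}. \<Sum>l3\<in>{1..d}. \<Sum>l4\<in>{1..d}. G4 l1 l2 l3 l4 \<omega>) =
          phi (VA \<omega>) * (\<Sum>l1\<in>{1..d}. \<Sum>l2\<in>{1..d}. \<Sum>l3\<in>{1..d}. \<Sum>l4\<in>{1..d}. if l1 = l2 then 0 else if l3 = l4 then 0 else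
            xv (VA \<omega>) l1 * yv (VA \<omega>) l2 * xv (VA \<omega>) l3 * yv (VA \<omega>) l4 * kap l1 l2 l3 l4)"
      unfolding sum_distrib_left G4_def fx4_def by (intro sum.cong refl) (auto simp: algebra_simps)
    then have g4: "(\<Sum>l1\<in>{1..d}. \<Sum>l2\<in>{1..d}. \<Sum>l3\<in>{1..d}. \<Sum>l4\<in>{1..d}. G4 l1 l2 l3 l4 \<omega>) =
       phi (VA \<omega>) * ((1 / real B) * (ssum d (xv (VA \<omega>)) * ssum d (yv (VA \<omega>)) - 2 * dotp d (xv (VA \<omega>)) (yv (VA \<omega>))
              + (dotp d (xv (VA \<omega>)) (yv (VA \<omega>)))^2))"
      unfolding c4 ssum_def dotp_def .
    have aux: "pp * (a2 + q / bb) = pp * a2 + pp * ((1 / bb) * q)" for pp a2 q bb :: real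
      by (simp add: algebra_simps)
    show ?thesis unfolding g4 fa2_def by (rule aux)
  qed
  have "expectation (\<lambda>\<omega>. phi (VA \<omega>) * (ZZ B d (\<lambda>t. X t \<omega>) (xv (VA \<omega>)) (yv (VA \<omega>)))^2) =
        expectation (\<lambda>\<omega>. fa2 (VA \<omega>)) + (\<Sum>l\<in>{1..d}. \<Sum>l'\<in>{1..d}. expectation (F2 l l')) +
        (\<Sum>l1\<in>{1..d}. \<Sum>l2\<in>{1..d}. \<Sum>l3\<in>{1..d}. \<Sum>l4\<in>{1..d}. expectation (F4 l1 l2 l3 l4))"
    unfolding pwL using fa2int F2int F4int by (simp add: Bochner_Integration.integral_sum)
  also have "(\<Sum>l\<in>{1..d}. \<Sum>l'\<in>{1..d}. expectation (F2 l l')) = 0" using F2E by simp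
  also have "(\<Sum>l1\<in>{1..d}. \<Sum>l2\<in>{1..d}. \<Sum>l3\<in>{1..d}. \<Sum>l4\<in>{1..d}. expectation (F4 l1 l2 l3 l4)) =
             (\<Sum>l1\<in>{1..d}. \<Sum>l2\<in>{1..d}. \<Sum>l3\<in>{1..d}. \<Sum>l4\<in>{1..d}. expectation (G4 l1 l2 l3 l4))"
    using F4E by (intro sum.cong refl) auto
  also have "expectation (\<lambda>\<omega>. fa2 (VA \<omega>)) + 0 + \<dots> =
      expectation (\<lambda>\<omega>. fa2 (VA \<omega>) + (\<Sum>l1\<in>{1..d}. \<Sum>l2\<in>{1..d}. \<Sum>l3\<in>{1..d}. \<Sum>l4\<in>{1..d}. G4 l1 l2 l3 l4 \<omega>))"
    using fa2int G4int by (simp add: Bochner_Integration.integral_sum)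
  also have "\<dots> = expectation (\<lambda>\<omega>. phi (VA \<omega>) * ((dotp d (xv (VA \<omega>)) (yv (VA \<omega>)))^2 +
             (ssum d (xv (VA \<omega>)) * ssum d (yv (VA \<omega>)) - 2 * dotp d (xv (VA \<omega>)) (yv (VA \<omega>))
              + (dotp d (xv (VA \<omega>)) (yv (VA \<omega>)))^2) / B))"
    unfolding pwR ..
  finally show ?thesis by (simp only: VA_def)
qed

end

definition blk :: "nat \<Rightarrow> nat \<Rightarrow> rtag set" where
  "blk D j = {R j i | i. i \<in> {1..2*D}} \<union> {C j i | i. i \<in> {1..2*D}} \<union> {Bt j i | i. i \<in> {1..2*D}} \<union>
             {G j i t | i t. i \<in> {1..2*D}}"

definition T1s :: "nat \<Rightarrow> nat \<Rightarrow> rtag set" where "T1s D k = (\<Union>j\<in>{1..k}. blk D j)"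

fun tshift :: "nat \<Rightarrow> rtag \<Rightarrow> rtag" where
  "tshift j (R _ i) = R j i" | "tshift j (C _ i) = C j i" | "tshift j (Bt _ i) = Bt j i" |
  "tshift j (G _ i t) = G j i t" | "tshift j (H l) = H l" | "tshift j (S l) = S l"

definition Wb :: "nat \<Rightarrow> nat \<Rightarrow> (rtag \<Rightarrow> real) \<Rightarrow> rtag \<Rightarrow> real" where
  "Wb D j w = restrict (\<lambda>t. w (tshift j t)) (blk D 1)"

lemma tshift_blk: "t \<in> blk D 1 \<Longrightarrow> tshift j t \<in> blk D j"
  by (auto simp: blk_def)

lemma inj_tshift: "inj_on (tshift j) (blk D 1)"
  by (auto simp: inj_on_def blk_def)

lemma blk_disj: "disjoint_family_on (blk D) A"
  by (auto simp: disjoint_family_on_def blk_def)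

lemma blk_sub_T1s: "j \<in> {1..k} \<Longrightarrow> blk D j \<subseteq> T1s D k" by (auto simp: T1s_def)

lemma T1s_rtags: "T1s D k \<subseteq> rtags D k d" by (auto simp: T1s_def blk_def rtags_def)

lemma T1s_T2s: "T1s D k \<inter> T2s d = {}" by (auto simp: T1s_def blk_def T2s_def)

lemma measurable_Wb:
  assumes "\<And>t. t \<in> blk D 1 \<Longrightarrow> tshift j t \<in> I"
  shows "Wb D j \<in> measurable (PiM I (\<lambda>_. borel)) (PiM (blk D 1) (\<lambda>_. borel :: real measure))"
  unfolding Wb_def by (intro measurable_restrict) (rule measurable_component_any)

lemma hashed_eq_Fh:
  assumes ne: "{i \<in> {1..2*D}. sign_split u i > 0} \<noteq> {}"
  shows "hashed_gcws D p X u j \<omega> = Fh D p u (Wb D j (\<lambda>t. X t \<omega>))"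
proof -
  let ?W = "Wb D j (\<lambda>t. X t \<omega>)"
  have W: "?W (R 1 i) = X (R j i) \<omega>" "?W (C 1 i) = X (C j i) \<omega>" "?W (Bt 1 i) = X (Bt j i) \<omega>"
      "?W (G 1 i t) = X (G j i t) \<omega>" if "i \<in> {1..2*D}" for i t
    using that by (auto simp: Wb_def blk_def)
  have g: "gcws D p (sign_split u) (\<lambda>i. X (R j i) \<omega>) (\<lambda>i. X (C j i) \<omega>) (\<lambda>i. X (Bt j i) \<omega>) =
        gcws D p (sign_split u) (\<lambda>i. ?W (R 1 i)) (\<lambda>i. ?W (C 1 i)) (\<lambda>i. ?W (Bt 1 i))"
    by (rule gcws_cong[OF ne]) (auto simp: Wb_def blk_def)
  obtain i t where it: "gcws D p (sign_split u) (\<lambda>i. ?W (R 1 i)) (\<lambda>i. ?W (C 1 i)) (\<lambda>i. ?W (Bt 1 i)) = (i, t)"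
    by (cases "gcws D p (sign_split u) (\<lambda>i. ?W (R 1 i)) (\<lambda>i. ?W (C 1 i)) (\<lambda>i. ?W (Bt 1 i))") auto
  have "i \<in> {1..2*D}" using gcws_fst_in[OF ne, of p "\<lambda>i. ?W (R 1 i)" "\<lambda>i. ?W (C 1 i)" "\<lambda>i. ?W (Bt 1 i)"] it by auto
  then show ?thesis unfolding hashed_gcws_def Fh_def g it by (auto simp: Wb_def blk_def)
qed

definition Hu :: "nat \<Rightarrow> real \<Rightarrow> (nat \<Rightarrow> real) \<Rightarrow> nat \<Rightarrow> (rtag \<Rightarrow> real) \<Rightarrow> real" where
  "Hu D p u j w = Fh D p u (Wb D j w)"

lemma measurable_Hu[measurable]:
  assumes ne: "{i \<in> {1..2*D}. sign_split u i > 0} \<noteq> {}" and j: "j \<in> {1..k}"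
  shows "Hu D p u j \<in> borel_measurable (PiM (T1s D k) (\<lambda>_. borel))"
proof -
  have "Wb D j \<in> measurable (PiM (T1s D k) (\<lambda>_. borel)) (PiM (blk D 1) (\<lambda>_. borel :: real measure))"
    using j by (intro measurable_Wb) (auto simp: T1s_def intro!: bexI[of _ j] tshift_blk)
  from measurable_compose[OF this measurable_Fh[OF ne]] show ?thesis
    unfolding Hu_def[abs_def] by (simp add: comp_def)
qed

lemma Wb_restrict:
  assumes j: "j \<in> {1..k}"
  shows "Wb D j (restrict (\<lambda>t. X t \<omega>) (T1s D k)) = Wb D j (\<lambda>t. X t \<omega>)"
  using j tshift_blk[of _ D j] blk_sub_T1s[OF j] unfolding Wb_def by (auto simp: fun_eq_iff)

lemma hashed_eq_Hu:
  assumes ne: "{i \<in> {1..2*D}. sign_split u i > 0} \<noteq> {}" and j: "j \<in> {1..k}"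
  shows "hashed_gcws D p X u j \<omega> = Hu D p u j (restrict (\<lambda>t. X t \<omega>) (T1s D k))"
  unfolding Hu_def Wb_restrict[OF j] by (rule hashed_eq_Fh[OF ne])

lemma sum_blocks:
  fixes g :: "nat \<Rightarrow> nat \<Rightarrow> real" and N :: nat assumes N: "N > 0"
  shows "(\<Sum>l\<in>{1..N*k}. g ((l-1) div N + 1) ((l-1) mod N)) = (\<Sum>j\<in>{1..k}. \<Sum>r<N. g j r)"
proof -
  have "(\<Sum>l\<in>{1..N*k}. g ((l-1) div N + 1) ((l-1) mod N)) = (\<Sum>l<k*N. g (l div N + 1) (l mod N))"
    unfolding One_nat_def sum.atLeast1_atMost_eq by (simp add: mult.commute)
  also have "\<dots> = (\<Sum>m<k. \<Sum>l\<in>{m*N..<m*N+N}. g (l div N + 1) (l mod N))"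
    by (rule sum.nat_group[symmetric])
  also have "\<dots> = (\<Sum>m<k. \<Sum>r<N. g (m + 1) r)"
  proof (rule sum.cong[OF refl])
    fix m
    have "(\<Sum>l\<in>{m*N..<m*N+N}. g (l div N + 1) (l mod N)) = (\<Sum>r\<in>{0..<N}. g ((r + m*N) div N + 1) ((r + m*N) mod N))"
      using sum.shift_bounds_nat_ivl[of "\<lambda>l. g (l div N + 1) (l mod N)" 0 "m*N" N] by (simp add: add.commute)
    also have "\<dots> = (\<Sum>r<N. g (m + 1) r)"
      using N by (intro sum.cong) auto
    finally show "(\<Sum>l\<in>{m*N..<m*N+N}. g (l div N + 1) (l mod N)) = (\<Sum>r<N. g (m + 1) r)" .
  qed
  also have "\<dots> = (\<Sum>j\<in>{1..k}. \<Sum>r<N. g j r)"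
    unfolding One_nat_def sum.atLeast1_atMost_eq by simp
  finally show ?thesis .
qed

lemma sum_if_card: "finite A \<Longrightarrow> (\<Sum>j\<in>A. if P j then 1 else 0 :: real) = real (card {j\<in>A. P j})"
  by (simp add: sum.inter_filter[symmetric])

lemma dotp_onehot:
  "dotp (2^b*k) (onehot_concat b h1) (onehot_concat b h2) = real (card {j\<in>{1..k}. h1 j = h2 j \<and> h1 j \<in> real ` {..<2^b}})"
proof -
  have "dotp (2^b*k) (onehot_concat b h1) (onehot_concat b h2) =
     (\<Sum>j\<in>{1..k}. \<Sum>r<2^b. (if h1 j = real r then 1 else 0) * (if h2 j = real r then 1 else 0))"
    unfolding dotp_def onehot_concat_def
    using sum_blocks[of "2^b" "\<lambda>j r. (if h1 j = real r then 1 else 0) * (if h2 j = real r then 1 else 0)" k]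
    by simp
  also have "\<dots> = (\<Sum>j\<in>{1..k}. if h1 j = h2 j \<and> h1 j \<in> real ` {..<2^b} then 1 else 0)"
  proof (intro sum.cong refl)
    fix j
    show "(\<Sum>r<2^b. (if h1 j = real r then 1 else 0) * (if h2 j = real r then 1 else 0)) =
          (if h1 j = h2 j \<and> h1 j \<in> real ` {..<2^b} then 1 else (0::real))"
    proof (cases "h1 j = h2 j \<and> h1 j \<in> real ` {..<2^b}")
      case True
      from True have "h1 j \<in> real ` {..<2^b}" by (rule conjunct2)
      then obtain r0 where r0': "h1 j = real r0" "r0 \<in> {..<2^b}" by (elim imageE)
      then have r0: "r0 < 2^b" "h1 j = real r0" "h2 j = real r0" using True by auto
      have "(\<Sum>r<2^b. (if h1 j = real r then 1 else 0) * (if h2 j = real r then 1 else 0)) = (\<Sum>r<2^b. if r = r0 then 1 else (0::real))"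
        using r0 by (intro sum.cong) auto
      also have "\<dots> = 1" using r0 by simp
      finally show ?thesis by (subst if_P[OF True])
    next
      case False
      then show ?thesis by (intro trans[OF sum.neutral]) auto
    qed
  qed
  also have "\<dots> = real (card {j\<in>{1..k}. h1 j = h2 j \<and> h1 j \<in> real ` {..<2^b}})"
    by (rule sum_if_card) simp
  finally show ?thesis .
qed

lemma ssum_onehot:
  "ssum (2^b*k) (onehot_concat b h) = real (card {j\<in>{1..k}. h j \<in> real ` {..<2^b}})"
proof -
  have "ssum (2^b*k) (onehot_concat b h) = (\<Sum>j\<in>{1..k}. \<Sum>r<2^b. (if h j = real r then 1 else 0))"
    unfolding ssum_def onehot_concat_def
    using sum_blocks[of "2^b" "\<lambda>j r. (if h j = real r then 1 else 0)" k]
    by simp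
  also have "\<dots> = (\<Sum>j\<in>{1..k}. if h j \<in> real ` {..<2^b} then 1 else 0)"
  proof (intro sum.cong refl)
    fix j
    show "(\<Sum>r<2^b. (if h j = real r then 1 else 0)) = (if h j \<in> real ` {..<2^b} then 1 else (0::real))"
    proof (cases "h j \<in> real ` {..<2^b}")
      case True
      then obtain r0 where r0: "r0 < 2^b" "h j = real r0" by auto
      have "(\<Sum>r<2^b. (if h j = real r then 1 else 0)) = (\<Sum>r<2^b. if r = r0 then 1 else (0::real))"
        using r0 by (intro sum.cong) auto
      also have "\<dots> = 1" using r0 by simp
      finally show ?thesis using True by simp
    next
      case False
      then show ?thesis by (intro trans[OF sum.neutral]) auto
    qed
  qed
  also have "\<dots> = real (card {j\<in>{1..k}. h j \<in> real ` {..<2^b}})"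
    by (rule sum_if_card) simp
  finally show ?thesis .
qed

lemma onehot_01: "onehot_concat b h l = 0 \<or> onehot_concat b h l = 1"
  by (simp add: onehot_concat_def)

lemma (in prob_space) distr_eq_finite_vals:
  fixes Y1 Y2 :: "'a \<Rightarrow> real"
  assumes Y1: "random_variable borel Y1" and Y2: "random_variable borel Y2" and F: "finite F"
    and eq: "\<And>a. a \<in> F \<Longrightarrow> prob {\<omega>\<in>space M. Y1 \<omega> = a} = prob {\<omega>\<in>space M. Y2 \<omega> = a}"
    and F1: "prob {\<omega>\<in>space M. Y1 \<omega> \<in> F} = 1" and F2: "prob {\<omega>\<in>space M. Y2 \<omega> \<in> F} = 1"
  shows "distr M borel Y1 = distr M borel Y2"
proof -
  have key: "prob (Y -` A \<inter> space M) = (\<Sum>a\<in>A \<inter> F. prob {\<omega>\<in>space M. Y \<omega> = a})"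
    if Y: "random_variable borel Y" and YF: "prob {\<omega>\<in>space M. Y \<omega> \<in> F} = 1" and A: "A \<in> sets borel" for Y A
  proof -
    have ae: "AE \<omega> in M. \<omega> \<in> {\<omega>\<in>space M. Y \<omega> \<in> F}" using YF by (rule AE_prob_1)
    have Fb: "F \<in> sets borel" using F by (intro borel_closed finite_imp_closed)
    have "prob (Y -` A \<inter> space M) = prob {\<omega>\<in>space M. Y \<omega> \<in> A \<inter> F}"
    proof (rule measure_eq_AE)
      show "AE x in M. (x \<in> Y -` A \<inter> space M) = (x \<in> {\<omega> \<in> space M. Y \<omega> \<in> A \<inter> F})"
        using ae by eventually_elim auto
      show "Y -` A \<inter> space M \<in> events" using Y A by (rule measurable_sets)
      have "Y -` (A \<inter> F) \<inter> space M \<in> events" using Y A Fb by (intro measurable_sets) auto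
      moreover have "Y -` (A \<inter> F) \<inter> space M = {\<omega> \<in> space M. Y \<omega> \<in> A \<inter> F}" by auto
      ultimately show "{\<omega> \<in> space M. Y \<omega> \<in> A \<inter> F} \<in> events" by simp
    qed
    also have "\<dots> = (\<Sum>a\<in>A \<inter> F. prob {\<omega>\<in>space M. Y \<omega> = a})"
      using Y F by (intro prob_vals_sum) auto
    finally show ?thesis .
  qed
  show ?thesis
  proof (rule measure_eqI)
    fix A assume A: "A \<in> sets (distr M borel Y1)"
    then have A': "A \<in> sets borel" by simp
    have "emeasure (distr M borel Y1) A = emeasure M (Y1 -` A \<inter> space M)" using Y1 A' by (rule emeasure_distr)
    also have "\<dots> = ennreal (prob (Y1 -` A \<inter> space M))" by (simp add: emeasure_eq_measure)
    also have "prob (Y1 -` A \<inter> space M) = prob (Y2 -` A \<inter> space M)"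
      unfolding key[OF Y1 F1 A'] key[OF Y2 F2 A'] using eq by (intro sum.cong) auto
    also have "ennreal (prob (Y2 -` A \<inter> space M)) = emeasure M (Y2 -` A \<inter> space M)" by (simp add: emeasure_eq_measure)
    also have "\<dots> = emeasure (distr M borel Y2) A" using Y2 A' by (rule emeasure_distr[symmetric])
    finally show "emeasure (distr M borel Y1) A = emeasure (distr M borel Y2) A" .
  qed simp
qed

context thm4 begin

lemma G_in: "j \<in> {1..k} \<Longrightarrow> i \<in> {1..2*D} \<Longrightarrow> G j i t \<in> rtags D k d" by (auto simp: rtags_def)

lemma G_range: assumes "j \<in> {1..k}" "i \<in> {1..2*D}"
  shows "prob {\<omega>\<in>space M. X (G j i t) \<omega> \<in> real ` {..<2^b}} = 1"
proof -
  have "prob {\<omega>\<in>space M. X (G j i t) \<omega> \<in> real ` {..<2^b}} = (\<Sum>a\<in>real ` {..<2^b}. prob {\<omega>\<in>space M. X (G j i t) \<omega> = a})"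
    using rv[OF G_in[OF assms]] by (intro prob_vals_sum) auto
  also have "\<dots> = (\<Sum>n<2^b. prob {\<omega>\<in>space M. X (G j i t) \<omega> = real n})"
    by (subst sum.reindex) (auto simp: inj_on_def)
  also have "\<dots> = (\<Sum>n<(2::nat)^b. 1 / 2^b)" using distG[OF assms] by (intro sum.cong) auto
  also have "\<dots> = 1" by simp
  finally show ?thesis .
qed

lemma ne_u: "{i \<in> {1..2*D}. sign_split u i > 0} \<noteq> {}" using sign_split_nonempty[OF u] .
lemma ne_v: "{i \<in> {1..2*D}. sign_split v i > 0} \<noteq> {}" using sign_split_nonempty[OF v] .

lemma AE_hashed_range:
  assumes ne: "{i \<in> {1..2*D}. sign_split w i > 0} \<noteq> {}"
  shows "AE \<omega> in M. \<forall>j\<in>{1..k}. hashed_gcws D p X w j \<omega> \<in> real ` {..<2^b}"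
proof -
  have "AE \<omega> in M. \<forall>q\<in>{(j, i, t::int). j \<in> {1..k} \<and> i \<in> {1..2*D}}. X (G (fst q) (fst (snd q)) (snd (snd q))) \<omega> \<in> real ` {..<2^b}"
  proof (subst AE_ball_countable)
    show "countable {(j, i, t::int). j \<in> {1..k} \<and> i \<in> {1..2*D}}" by (rule countableI_type)
    show "\<forall>q\<in>{(j, i, t::int). j \<in> {1..k} \<and> i \<in> {1..2*D}}. AE \<omega> in M. X (G (fst q) (fst (snd q)) (snd (snd q))) \<omega> \<in> real ` {..<2^b}"
    proof safe
      fix j i and t :: int assume "j \<in> {1..k}" "i \<in> {1..2*D}"
      from AE_prob_1[OF G_range[OF this, of t]]
      show "AE \<omega> in M. X (G (fst (j, i, t)) (fst (snd (j, i, t))) (snd (snd (j, i, t)))) \<omega> \<in> real ` {..<2^b}"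
        by auto
    qed
  qed
  then show ?thesis
  proof eventually_elim
    case (elim \<omega>)
    show ?case
    proof
      fix j assume j: "j \<in> {1..k}"
      obtain i t where it: "gcws D p (sign_split w) (\<lambda>i. X (R j i) \<omega>) (\<lambda>i. X (C j i) \<omega>) (\<lambda>i. X (Bt j i) \<omega>) = (i, t)"
        by (cases "gcws D p (sign_split w) (\<lambda>i. X (R j i) \<omega>) (\<lambda>i. X (C j i) \<omega>) (\<lambda>i. X (Bt j i) \<omega>)") auto
      have i: "i \<in> {1..2*D}" using gcws_fst_in[OF ne, of p "\<lambda>i. X (R j i) \<omega>" "\<lambda>i. X (C j i) \<omega>" "\<lambda>i. X (Bt j i) \<omega>"] it by auto
      have "hashed_gcws D p X w j \<omega> = X (G j i t) \<omega>" unfolding hashed_gcws_def it by simp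
      with elim j i show "hashed_gcws D p X w j \<omega> \<in> real ` {..<2^b}" by force
    qed
  qed
qed

lemma marginal_eq:
  assumes t: "t \<in> blk D 1" and j: "j \<in> {1..k}"
  shows "distr M borel (X (tshift j t)) = distr M borel (X t)"
proof -
  have k1: "1 \<in> {1..k}" using kpos by auto
  have lb: "distr M borel Y = distr M lborel Y" for Y :: "'a \<Rightarrow> real" by (simp add: distr_def)
  from t consider (R) i where "i \<in> {1..2*D}" "t = R 1 i" | (C) i where "i \<in> {1..2*D}" "t = C 1 i"
    | (Bt) i where "i \<in> {1..2*D}" "t = Bt 1 i" | (G) i tt where "i \<in> {1..2*D}" "t = G 1 i tt"
    unfolding blk_def by blast
  then show ?thesis
  proof cases
    case R then show ?thesis unfolding lb using distributed_distr_eq_density[OF distR[OF j R(1)]]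
        distributed_distr_eq_density[OF distR[OF k1 R(1)]] by simp
  next
    case C then show ?thesis unfolding lb using distributed_distr_eq_density[OF distC[OF j C(1)]]
        distributed_distr_eq_density[OF distC[OF k1 C(1)]] by simp
  next
    case Bt then show ?thesis unfolding lb using distB[OF j Bt(1)] distB[OF k1 Bt(1)] by simp
  next
    case G
    have "distr M borel (X (G j i tt)) = distr M borel (X (G 1 i tt))"
    proof (rule distr_eq_finite_vals)
      show "random_variable borel (X (G j i tt))" "random_variable borel (X (G 1 i tt))"
        using rv G_in G(1) j k1 by auto
      show "finite (real ` {..<2^b})" by simp
      show "prob {\<omega>\<in>space M. X (G j i tt) \<omega> = a} = prob {\<omega>\<in>space M. X (G 1 i tt) \<omega> = a}" if "a \<in> real ` {..<2^b}" for a
        using that distG[OF j G(1)] distG[OF k1 G(1)] by auto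
      show "prob {\<omega>\<in>space M. X (G j i tt) \<omega> \<in> real ` {..<2^b}} = 1" "prob {\<omega>\<in>space M. X (G 1 i tt) \<omega> \<in> real ` {..<2^b}} = 1"
        using G_range G(1) j k1 by auto
    qed
    then show ?thesis using G by simp
  qed
qed

end

context thm4 begin

lemma blk_rtags: "j \<in> {1..k} \<Longrightarrow> blk D j \<subseteq> rtags D k d" by (auto simp: blk_def rtags_def)

lemma Wb_restrict_blk: "Wb D j (restrict (\<lambda>t. X t \<omega>) (blk D j)) = Wb D j (\<lambda>t. X t \<omega>)"
  using tshift_blk[of _ D j] unfolding Wb_def by (auto simp: fun_eq_iff)

lemma measurable_Wb_blk: "Wb D j \<in> measurable (PiM (blk D j) (\<lambda>_. borel)) (PiM (blk D 1) (\<lambda>_. borel :: real measure))"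
  by (intro measurable_Wb tshift_blk)

lemma measurable_V: "j \<in> {1..k} \<Longrightarrow> (\<lambda>x. restrict (\<lambda>t. X t x) (blk D j)) \<in> measurable M (PiM (blk D j) (\<lambda>_. borel))"
  using blk_rtags rv by (intro measurable_restrict) auto

lemma distr_W:
  assumes j: "j \<in> {1..k}"
  shows "distr M (PiM (blk D 1) (\<lambda>_. borel)) (\<lambda>\<omega>. Wb D j (\<lambda>t. X t \<omega>)) = PiM (blk D 1) (\<lambda>t. distr M borel (X t))"
proof -
  let ?Mt = "\<lambda>t. distr M borel (X t)"
  have ivj: "indep_vars (\<lambda>_. borel) X (blk D j)" using indep blk_rtags[OF j] by (rule indep_vars_subset)
  have ne: "blk D j \<noteq> {}" using D by (auto simp: blk_def)
  have d1: "distr M (PiM (blk D j) (\<lambda>_. borel)) (\<lambda>x. \<lambda>t\<in>blk D j. X t x) = PiM (blk D j) ?Mt"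
    using indep_vars_iff_distr_eq_PiM'[OF ne, where M'="\<lambda>_. borel" and X=X] ivj rv blk_rtags[OF j] by auto
  have "(\<lambda>\<omega>. Wb D j (\<lambda>t. X t \<omega>)) = Wb D j \<circ> (\<lambda>x. \<lambda>t\<in>blk D j. X t x)"
    using Wb_restrict_blk by (auto simp: fun_eq_iff)
  then have "distr M (PiM (blk D 1) (\<lambda>_. borel)) (\<lambda>\<omega>. Wb D j (\<lambda>t. X t \<omega>)) =
      distr (distr M (PiM (blk D j) (\<lambda>_. borel)) (\<lambda>x. \<lambda>t\<in>blk D j. X t x)) (PiM (blk D 1) (\<lambda>_. borel)) (Wb D j)"
    using distr_distr[OF measurable_Wb_blk measurable_V[OF j]] by simp
  also have "\<dots> = distr (PiM (blk D j) ?Mt) (PiM (blk D 1) (\<lambda>_. borel)) (Wb D j)" unfolding d1 ..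
  also have "\<dots> = distr (PiM (blk D j) ?Mt) (PiM (blk D 1) (\<lambda>t. ?Mt (tshift j t))) (\<lambda>\<omega>. \<lambda>n\<in>blk D 1. \<omega> (tshift j n))"
    by (intro distr_cong refl sets_PiM_cong) (auto simp: Wb_def)
  also have "\<dots> = PiM (blk D 1) (\<lambda>t. ?Mt (tshift j t))"
  proof (rule distr_PiM_reindex)
    show "prob_space (?Mt i)" if "i \<in> blk D j" for i
      using that blk_rtags[OF j] rv by (intro prob_space_distr) auto
    show "inj_on (tshift j) (blk D 1)" by (rule inj_tshift)
    show "tshift j \<in> blk D 1 \<rightarrow> blk D j" using tshift_blk by auto
  qed
  also have "\<dots> = PiM (blk D 1) ?Mt"
    using marginal_eq[OF _ j] by (intro PiM_cong) auto
  finally show ?thesis .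
qed

lemma event_meas:
  assumes j: "j \<in> {1..k}"
  shows "{\<omega>\<in>space M. hashed_gcws D p X u j \<omega> = hashed_gcws D p X v j \<omega>} =
    (\<lambda>\<omega>. Wb D j (\<lambda>t. X t \<omega>)) -` {w \<in> space (PiM (blk D 1) (\<lambda>_. borel)). Fh D p u w = Fh D p v w} \<inter> space M"
proof -
  have m: "(\<lambda>\<omega>. Wb D j (\<lambda>t. X t \<omega>)) \<in> measurable M (PiM (blk D 1) (\<lambda>_. borel))"
    using measurable_compose[OF measurable_V[OF j] measurable_Wb_blk] Wb_restrict_blk by (simp add: comp_def)
  have e1: "hashed_gcws D p X u j \<omega> = Fh D p u (Wb D j (\<lambda>t. X t \<omega>))" for \<omega> by (rule hashed_eq_Fh[OF ne_u])
  have e2: "hashed_gcws D p X v j \<omega> = Fh D p v (Wb D j (\<lambda>t. X t \<omega>))" for \<omega> by (rule hashed_eq_Fh[OF ne_v])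
  show ?thesis using measurable_space[OF m] by (auto simp: e1 e2)
qed

lemma measurable_W: "j \<in> {1..k} \<Longrightarrow> (\<lambda>\<omega>. Wb D j (\<lambda>t. X t \<omega>)) \<in> measurable M (PiM (blk D 1) (\<lambda>_. borel))"
  using measurable_compose[OF measurable_V measurable_Wb_blk] Wb_restrict_blk by (simp add: comp_def)

lemma Q_sets: "{w \<in> space (PiM (blk D 1) (\<lambda>_. borel)). Fh D p u w = Fh D p v w} \<in> sets (PiM (blk D 1) (\<lambda>_. borel))"
  using measurable_Fh[OF ne_u] measurable_Fh[OF ne_v] by measurable

lemma event_sets: "j \<in> {1..k} \<Longrightarrow> {\<omega>\<in>space M. hashed_gcws D p X u j \<omega> = hashed_gcws D p X v j \<omega>} \<in> events"
  unfolding event_meas by (rule measurable_sets[OF measurable_W Q_sets])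

lemma event_prob:
  assumes j: "j \<in> {1..k}"
  shows "prob {\<omega>\<in>space M. hashed_gcws D p X u j \<omega> = hashed_gcws D p X v j \<omega>} =
         prob {\<omega>\<in>space M. hashed_gcws D p X u 1 \<omega> = hashed_gcws D p X v 1 \<omega>}"
proof -
  have k1: "1 \<in> {1..k}" using kpos by auto
  have "prob {\<omega>\<in>space M. hashed_gcws D p X u j \<omega> = hashed_gcws D p X v j \<omega>} =
    measure (distr M (PiM (blk D 1) (\<lambda>_. borel)) (\<lambda>\<omega>. Wb D j (\<lambda>t. X t \<omega>))) {w \<in> space (PiM (blk D 1) (\<lambda>_. borel)). Fh D p u w = Fh D p v w}"
    unfolding event_meas[OF j] by (rule measure_distr[OF measurable_W[OF j] Q_sets, symmetric])
  also have "\<dots> = measure (distr M (PiM (blk D 1) (\<lambda>_. borel)) (\<lambda>\<omega>. Wb D 1 (\<lambda>t. X t \<omega>))) {w \<in> space (PiM (blk D 1) (\<lambda>_. borel)). Fh D p u w = Fh D p v w}"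
    unfolding distr_W[OF j] distr_W[OF k1] ..
  also have "\<dots> = prob {\<omega>\<in>space M. hashed_gcws D p X u 1 \<omega> = hashed_gcws D p X v 1 \<omega>}"
    unfolding event_meas[OF k1] by (rule measure_distr[OF measurable_W[OF k1] Q_sets])
  finally show ?thesis .
qed

lemma indep_Y:
  "indep_vars (\<lambda>_. count_space UNIV) (\<lambda>j \<omega>. hashed_gcws D p X u j \<omega> = hashed_gcws D p X v j \<omega>) {1..k}"
proof -
  have iv: "indep_vars (\<lambda>j. PiM (blk D j) (\<lambda>_. borel)) (\<lambda>j \<omega>. restrict (\<lambda>t. X t \<omega>) (blk D j)) {1..k}"
    by (rule indep_vars_restrict[OF indep]) (auto simp: blk_rtags blk_disj)
  have m: "(\<lambda>w. Fh D p u (Wb D j w) = Fh D p v (Wb D j w)) \<in> measurable (PiM (blk D j) (\<lambda>_. borel)) (count_space UNIV)" for j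
  proof -
    have a: "(\<lambda>w. Fh D p u (Wb D j w)) \<in> borel_measurable (PiM (blk D j) (\<lambda>_. borel))"
      using measurable_compose[OF measurable_Wb_blk measurable_Fh[OF ne_u]] by (simp add: comp_def)
    have b: "(\<lambda>w. Fh D p v (Wb D j w)) \<in> borel_measurable (PiM (blk D j) (\<lambda>_. borel))"
      using measurable_compose[OF measurable_Wb_blk measurable_Fh[OF ne_v]] by (simp add: comp_def)
    show ?thesis unfolding pred_def by (rule measurable_equality_set[OF a b])
  qed
  have "indep_vars (\<lambda>_. count_space UNIV) (\<lambda>j \<omega>. Fh D p u (Wb D j (restrict (\<lambda>t. X t \<omega>) (blk D j))) = Fh D p v (Wb D j (restrict (\<lambda>t. X t \<omega>) (blk D j)))) {1..k}"
    by (rule indep_vars_compose2[OF iv m])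
  then show ?thesis
  proof (rule indep_vars_cong[THEN iffD1, rotated -1])
    fix j
    have e1: "hashed_gcws D p X u j \<omega> = Fh D p u (Wb D j (\<lambda>t. X t \<omega>))" for \<omega> by (rule hashed_eq_Fh[OF ne_u])
    have e2: "hashed_gcws D p X v j \<omega> = Fh D p v (Wb D j (\<lambda>t. X t \<omega>))" for \<omega> by (rule hashed_eq_Fh[OF ne_v])
    show "(\<lambda>\<omega>. Fh D p u (Wb D j (restrict (\<lambda>t. X t \<omega>) (blk D j))) = Fh D p v (Wb D j (restrict (\<lambda>t. X t \<omega>) (blk D j)))) =
          (\<lambda>\<omega>. hashed_gcws D p X u j \<omega> = hashed_gcws D p X v j \<omega>)"
      by (simp add: Wb_restrict_blk e1 e2)
  qed auto
qed

end

context thm4 begin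

abbreviation "Ev j \<equiv> {\<omega>\<in>space M. hashed_gcws D p X u j \<omega> = hashed_gcws D p X v j \<omega>}"
abbreviation "Pb0 \<equiv> prob (Ev 1)"

lemma Ev_prob: "j \<in> {1..k} \<Longrightarrow> prob (Ev j) = Pb0" by (rule event_prob)

lemma Ev_pair: assumes "j \<in> {1..k}" "j' \<in> {1..k}" "j \<noteq> j'"
  shows "prob (Ev j \<inter> Ev j') = Pb0 * Pb0"
proof -
  have "prob (\<Inter>i\<in>{j, j'}. (\<lambda>\<omega>. hashed_gcws D p X u i \<omega> = hashed_gcws D p X v i \<omega>) -` {True} \<inter> space M) =
        (\<Prod>i\<in>{j, j'}. prob ((\<lambda>\<omega>. hashed_gcws D p X u i \<omega> = hashed_gcws D p X v i \<omega>) -` {True} \<inter> space M))"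
    by (rule indep_varsD[OF indep_Y]) (use assms in auto)
  moreover have "(\<lambda>\<omega>. hashed_gcws D p X u i \<omega> = hashed_gcws D p X v i \<omega>) -` {True} \<inter> space M = Ev i" for i by auto
  ultimately have "prob (Ev j \<inter> Ev j') = prob (Ev j) * prob (Ev j')" using assms(3) by simp
  then show ?thesis using Ev_prob[OF assms(1)] Ev_prob[OF assms(2)] by simp
qed

lemma E_ind_Ev: "j \<in> {1..k} \<Longrightarrow> expectation (\<lambda>\<omega>. if hashed_gcws D p X u j \<omega> = hashed_gcws D p X v j \<omega> then 1 else 0) = prob (Ev j)"
proof -
  assume j: "j \<in> {1..k}"
  have "expectation (\<lambda>\<omega>. if hashed_gcws D p X u j \<omega> = hashed_gcws D p X v j \<omega> then 1 else 0) = expectation (indicator (Ev j))"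
    by (intro Bochner_Integration.integral_cong) (auto simp: indicator_def)
  also have "\<dots> = prob (Ev j)" using event_sets[OF j] by (simp add: Int_absorb2 sets.sets_into_space)
  finally show ?thesis .
qed

lemma E_ind_Ev2: "j \<in> {1..k} \<Longrightarrow> j' \<in> {1..k} \<Longrightarrow>
  expectation (\<lambda>\<omega>. (if hashed_gcws D p X u j \<omega> = hashed_gcws D p X v j \<omega> then 1 else 0) *
                    (if hashed_gcws D p X u j' \<omega> = hashed_gcws D p X v j' \<omega> then 1 else 0) :: real) = prob (Ev j \<inter> Ev j')"
proof -
  assume j: "j \<in> {1..k}" "j' \<in> {1..k}"
  have "expectation (\<lambda>\<omega>. (if hashed_gcws D p X u j \<omega> = hashed_gcws D p X v j \<omega> then 1 else 0) *
                    (if hashed_gcws D p X u j' \<omega> = hashed_gcws D p X v j' \<omega> then 1 else 0) :: real) = expectation (indicator (Ev j \<inter> Ev j'))"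
    by (intro Bochner_Integration.integral_cong) (auto simp: indicator_def)
  also have "\<dots> = prob (Ev j \<inter> Ev j')" using event_sets[OF j(1)] event_sets[OF j(2)] by (simp add: Int_absorb2 sets.sets_into_space)
  finally show ?thesis .
qed

lemma ind_int: "integrable M (\<lambda>\<omega>. if hashed_gcws D p X u j \<omega> = hashed_gcws D p X v j \<omega> then 1 else 0 :: real)" if j: "j \<in> {1..k}" for j
proof (rule integrable_bounded[where c=1])
  have "indicator (Ev j) \<in> borel_measurable M" using event_sets[OF j] by simp
  moreover have "\<And>w. w \<in> space M \<Longrightarrow> indicator (Ev j) w = (if hashed_gcws D p X u j w = hashed_gcws D p X v j w then 1 else 0 :: real)"
    by (auto simp: indicator_def)
  ultimately show "(\<lambda>\<omega>. if hashed_gcws D p X u j \<omega> = hashed_gcws D p X v j \<omega> then 1 else 0 :: real) \<in> borel_measurable M"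
    by (rule measurable_cong[THEN iffD1, rotated])
qed auto

lemma acount_sum: "real (card {j\<in>{1..k}. hashed_gcws D p X u j \<omega> = hashed_gcws D p X v j \<omega>}) =
   (\<Sum>j\<in>{1..k}. if hashed_gcws D p X u j \<omega> = hashed_gcws D p X v j \<omega> then 1 else 0)"
  by (rule sum_if_card[symmetric]) simp

lemma E_acount: "expectation (\<lambda>\<omega>. real (card {j\<in>{1..k}. hashed_gcws D p X u j \<omega> = hashed_gcws D p X v j \<omega>})) = k * Pb0"
proof -
  have "expectation (\<lambda>\<omega>. real (card {j\<in>{1..k}. hashed_gcws D p X u j \<omega> = hashed_gcws D p X v j \<omega>})) =
     (\<Sum>j\<in>{1..k}. expectation (\<lambda>\<omega>. if hashed_gcws D p X u j \<omega> = hashed_gcws D p X v j \<omega> then 1 else 0))"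
    unfolding acount_sum by (rule Bochner_Integration.integral_sum) (rule ind_int, simp)
  also have "\<dots> = (\<Sum>j\<in>{1..k}. Pb0)"
    by (rule sum.cong[OF refl]) (simp only: E_ind_Ev Ev_prob)
  finally show ?thesis by simp
qed

lemma E_acount2: "expectation (\<lambda>\<omega>. (real (card {j\<in>{1..k}. hashed_gcws D p X u j \<omega> = hashed_gcws D p X v j \<omega>}))^2) =
   k * Pb0 + (real k * real k - real k) * Pb0 * Pb0"
proof -
  let ?I = "\<lambda>j \<omega>. if hashed_gcws D p X u j \<omega> = hashed_gcws D p X v j \<omega> then 1 else (0::real)"
  have sq: "(real (card {j\<in>{1..k}. hashed_gcws D p X u j \<omega> = hashed_gcws D p X v j \<omega>}))^2 =
      (\<Sum>j\<in>{1..k}. \<Sum>j'\<in>{1..k}. ?I j \<omega> * ?I j' \<omega>)" for \<omega>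
    unfolding acount_sum power2_eq_square by (rule sum_product)
  have int2: "integrable M (\<lambda>\<omega>. ?I j \<omega> * ?I j' \<omega>)" if "j \<in> {1..k}" "j' \<in> {1..k}" for j j'
    using borel_measurable_integrable[OF ind_int[OF that(1)]] borel_measurable_integrable[OF ind_int[OF that(2)]]
    by (intro integrable_bounded[where c=1] borel_measurable_times) auto
  have "expectation (\<lambda>\<omega>. (real (card {j\<in>{1..k}. hashed_gcws D p X u j \<omega> = hashed_gcws D p X v j \<omega>}))^2) =
     (\<Sum>j\<in>{1..k}. \<Sum>j'\<in>{1..k}. expectation (\<lambda>\<omega>. ?I j \<omega> * ?I j' \<omega>))"
  proof -
    have "expectation (\<lambda>\<omega>. \<Sum>j\<in>{1..k}. \<Sum>j'\<in>{1..k}. ?I j \<omega> * ?I j' \<omega>) =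
        (\<Sum>j\<in>{1..k}. expectation (\<lambda>\<omega>. \<Sum>j'\<in>{1..k}. ?I j \<omega> * ?I j' \<omega>))"
      by (rule Bochner_Integration.integral_sum) (use int2 in auto)
    also have "\<dots> = (\<Sum>j\<in>{1..k}. \<Sum>j'\<in>{1..k}. expectation (\<lambda>\<omega>. ?I j \<omega> * ?I j' \<omega>))"
      by (intro sum.cong refl Bochner_Integration.integral_sum) (use int2 in auto)
    finally show ?thesis unfolding sq .
  qed
  also have "\<dots> = (\<Sum>j\<in>{1..k}. \<Sum>j'\<in>{1..k}. Pb0 * Pb0 + (if j = j' then Pb0 - Pb0 * Pb0 else 0))"
  proof (intro sum.cong refl)
    fix j j' assume j: "j \<in> {1..k}" "j' \<in> {1..k}"
    show "expectation (\<lambda>\<omega>. ?I j \<omega> * ?I j' \<omega>) = Pb0 * Pb0 + (if j = j' then Pb0 - Pb0 * Pb0 else 0)"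
    proof (cases "j = j'")
      case True
      then show ?thesis unfolding E_ind_Ev2[OF j] using Ev_prob[OF j(1)] by simp
    next
      case False
      then show ?thesis unfolding E_ind_Ev2[OF j] using Ev_pair[OF j False] by simp
    qed
  qed
  also have "\<dots> = (\<Sum>j\<in>{1..k}. real k * (Pb0 * Pb0) + (Pb0 - Pb0 * Pb0))"
    by (intro sum.cong refl) (simp add: sum.distrib)
  also have "\<dots> = k * Pb0 + (real k * real k - real k) * Pb0 * Pb0"
    by (simp add: algebra_simps)
  finally show ?thesis .
qed

end

context thm4 begin

lemma Pb0_bounds: "0 \<le> Pb0" "Pb0 \<le> 1" by auto

lemma binomial:
  "prob {\<omega>\<in>space M. card {j\<in>{1..k}. hashed_gcws D p X u j \<omega> = hashed_gcws D p X v j \<omega>} = n} = pmf (binomial_pmf k Pb0) n"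
proof -
  let ?Y = "\<lambda>j \<omega>. hashed_gcws D p X u j \<omega> = hashed_gcws D p X v j \<omega>"
  let ?SS = "{SS. SS \<subseteq> {1..k} \<and> card SS = n}"
  define E where "E SS = {\<omega>\<in>space M. {j\<in>{1..k}. ?Y j \<omega>} = SS}" for SS
  have union: "{\<omega>\<in>space M. card {j\<in>{1..k}. ?Y j \<omega>} = n} = (\<Union>SS\<in>?SS. E SS)"
    unfolding E_def by auto
  have EI: "E SS = (\<Inter>j\<in>{1..k}. ?Y j -` {j \<in> SS} \<inter> space M)" if SS: "SS \<subseteq> {1..k}" for SS
  proof -
    have ne: "{1..k} \<noteq> {}" using kpos by auto
    show ?thesis
    proof (rule set_eqI)
      fix x
      have a: "x \<in> (\<Inter>j\<in>{1..k}. ?Y j -` {j \<in> SS} \<inter> space M) \<longleftrightarrow> x \<in> space M \<and> (\<forall>j\<in>{1..k}. ?Y j x = (j \<in> SS))"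
        using ne by blast
      have b: "{j\<in>{1..k}. ?Y j x} = SS \<longleftrightarrow> (\<forall>j\<in>{1..k}. ?Y j x = (j \<in> SS))" using SS by blast
      show "x \<in> E SS \<longleftrightarrow> x \<in> (\<Inter>j\<in>{1..k}. ?Y j -` {j \<in> SS} \<inter> space M)"
        unfolding a E_def using b by blast
    qed
  qed
  have pE: "prob (E SS) = Pb0 ^ n * (1 - Pb0) ^ (k - n)" if SS: "SS \<in> ?SS" for SS
  proof -
    have "prob (E SS) = (\<Prod>j\<in>{1..k}. prob (?Y j -` {j \<in> SS} \<inter> space M))"
      unfolding EI[of SS, OF conjunct1[OF SS[unfolded mem_Collect_eq]]] using SS by (intro indep_varsD[OF indep_Y]) (use kpos in auto)
    also have "\<dots> = (\<Prod>j\<in>{1..k}. if j \<in> SS then Pb0 else 1 - Pb0)"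
    proof (intro prod.cong refl)
      fix j assume j: "j \<in> {1..k}"
      show "prob (?Y j -` {j \<in> SS} \<inter> space M) = (if j \<in> SS then Pb0 else 1 - Pb0)"
      proof (cases "j \<in> SS")
        case True
        have "?Y j -` {j \<in> SS} \<inter> space M = Ev j" using True by auto
        then show ?thesis using True Ev_prob[OF j] by simp
      next
        case False
        have "?Y j -` {j \<in> SS} \<inter> space M = space M - Ev j" using False by auto
        then show ?thesis using False Ev_prob[OF j] prob_compl[OF event_sets[OF j]] by simp
      qed
    qed
    also have "\<dots> = Pb0 ^ card ({1..k} \<inter> {j. j \<in> SS}) * (1 - Pb0) ^ card ({1..k} \<inter> - {j. j \<in> SS})"
      by (simp add: prod.If_cases)
    also have "{1..k} \<inter> {j. j \<in> SS} = SS" using SS by auto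
    also have "{1..k} \<inter> - {j. j \<in> SS} = {1..k} - SS" by auto
    also have "card ({1..k} - SS) = k - n" using SS by (subst card_Diff_subset) (auto intro: finite_subset)
    finally show ?thesis using SS by simp
  qed
  have "prob {\<omega>\<in>space M. card {j\<in>{1..k}. ?Y j \<omega>} = n} = (\<Sum>SS\<in>?SS. prob (E SS))"
    unfolding union
  proof (rule finite_measure_finite_Union)
    show "finite ?SS" by (rule finite_subset[of _ "Pow {1..k}"]) auto
    show "E ` ?SS \<subseteq> events"
    proof safe
      fix SS assume "SS \<subseteq> {1..k}" "n = card SS"
      then have "E SS = (\<Inter>j\<in>{1..k}. ?Y j -` {j \<in> SS} \<inter> space M)" by (intro EI)
      moreover have mem: "?Y j -` {j \<in> SS} \<inter> space M \<in> events" if "j \<in> {1..k}" for j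
        using measurable_sets[OF indep_vars_def[THEN iffD1, OF indep_Y, THEN conjunct1, rule_format, OF that], of "{j \<in> SS}"]
        by simp
      moreover have "(\<Inter>j\<in>{1..k}. ?Y j -` {j \<in> SS} \<inter> space M) \<in> events"
        using kpos by (intro sets.finite_INT mem) auto
      ultimately show "E SS \<in> events" by simp
    qed
    show "disjoint_family_on E ?SS" by (auto simp: disjoint_family_on_def E_def)
  qed
  also have "\<dots> = (\<Sum>SS\<in>?SS. Pb0 ^ n * (1 - Pb0) ^ (k - n))" using pE by (intro sum.cong) auto
  also have "\<dots> = real (k choose n) * (Pb0 ^ n * (1 - Pb0) ^ (k - n))"
    using n_subsets[of "{1..k}" n] by simp
  also have "\<dots> = pmf (binomial_pmf k Pb0) n" by (simp add: Pb0_bounds)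
  finally show ?thesis .
qed

end

lemma measurable_Wb_any: "Wb D j \<in> measurable (PiM I (\<lambda>_. borel)) (PiM (blk D 1) (\<lambda>_. borel :: real measure))"
  unfolding Wb_def by (intro measurable_restrict) (rule measurable_component_any)

lemma measurable_Hu_any:
  assumes ne: "{i \<in> {1..2*D}. sign_split u i > 0} \<noteq> {}"
  shows "Hu D p u j \<in> borel_measurable (PiM I (\<lambda>_. borel))"
  using measurable_compose[OF measurable_Wb_any measurable_Fh[OF ne]] unfolding Hu_def[abs_def] by (simp add: comp_def)

lemma cs_cong3:
  assumes "\<And>l. l \<in> {1..d'} \<Longrightarrow> h l = h' l" "\<And>l. l \<in> {1..d'} \<Longrightarrow> s l = s' l" "\<And>l. l \<in> {1..d'} \<Longrightarrow> x l = x' l"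
  shows "count_sketch d' h s x m = count_sketch d' h' s' x' m"
  unfolding count_sketch_def using assms by (intro sum.cong) auto

lemma (in prob_space) variance_expand:
  fixes Z :: "'a \<Rightarrow> real"
  assumes "integrable M Z" "integrable M (\<lambda>\<omega>. (Z \<omega>)^2)"
  shows "expectation (\<lambda>\<omega>. (Z \<omega> - expectation Z)^2) = expectation (\<lambda>\<omega>. (Z \<omega>)^2) - (expectation Z)^2"
proof -
  have "(\<lambda>\<omega>. (Z \<omega> - expectation Z)^2) = (\<lambda>\<omega>. (Z \<omega>)^2 - 2 * expectation Z * Z \<omega> + (expectation Z)^2)"
    by (auto simp: power2_eq_square algebra_simps)
  then show ?thesis using assms by (simp add: prob_space power2_eq_square)
qed

context thm4 begin

abbreviation "VA \<omega> \<equiv> restrict (\<lambda>t. X t \<omega>) (T1s D k)"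
abbreviation "V2 \<omega> \<equiv> restrict (\<lambda>t. X t \<omega>) (T2s d)"
abbreviation "xv w \<equiv> onehot_concat b (\<lambda>j. Hu D p u j w)"
abbreviation "yv w \<equiv> onehot_concat b (\<lambda>j. Hu D p v j w)"

lemma mVA: "(\<lambda>\<omega>. VA \<omega>) \<in> measurable M (PiM (T1s D k) (\<lambda>_. borel))"
  using T1s_rtags[of D k d] rv by (intro measurable_restrict) auto
lemma mV2: "(\<lambda>\<omega>. V2 \<omega>) \<in> measurable M (PiM (T2s d) (\<lambda>_. borel))"
  using T2s_sub rv by (intro measurable_restrict) auto

lemma mVAc[measurable]: "(\<lambda>\<omega>. VA \<omega> t) \<in> borel_measurable M"
  using measurable_compose[OF mVA measurable_component_any] by (simp add: comp_def)
lemma mV2c[measurable]: "(\<lambda>\<omega>. V2 \<omega> t) \<in> borel_measurable M"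
  using measurable_compose[OF mV2 measurable_component_any] by (simp add: comp_def)

lemma mHu[measurable]: "(\<lambda>\<omega>. Hu D p u j (VA \<omega>)) \<in> borel_measurable M"
  using measurable_compose[OF mVA measurable_Hu_any[OF ne_u]] by (simp add: comp_def)
lemma mHv[measurable]: "(\<lambda>\<omega>. Hu D p v j (VA \<omega>)) \<in> borel_measurable M"
  using measurable_compose[OF mVA measurable_Hu_any[OF ne_v]] by (simp add: comp_def)

lemma mxv[measurable]: "(\<lambda>w. xv w l) \<in> borel_measurable (PiM (T1s D k) (\<lambda>_. borel))"
  unfolding onehot_concat_def using measurable_Hu_any[OF ne_u] by measurable
lemma myv[measurable]: "(\<lambda>w. yv w l) \<in> borel_measurable (PiM (T1s D k) (\<lambda>_. borel))"
  unfolding onehot_concat_def using measurable_Hu_any[OF ne_v] by measurable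

lemma mxvM[measurable]: "(\<lambda>\<omega>. xv (VA \<omega>) l) \<in> borel_measurable M"
  using measurable_compose[OF mVA mxv] by (simp add: comp_def)
lemma myvM[measurable]: "(\<lambda>\<omega>. yv (VA \<omega>) l) \<in> borel_measurable M"
  using measurable_compose[OF mVA myv] by (simp add: comp_def)

lemma hu_VA: "j \<in> {1..k} \<Longrightarrow> hashed_gcws D p X u j \<omega> = Hu D p u j (VA \<omega>)"
  by (rule hashed_eq_Hu[OF ne_u])
lemma hv_VA: "j \<in> {1..k} \<Longrightarrow> hashed_gcws D p X v j \<omega> = Hu D p v j (VA \<omega>)"
  by (rule hashed_eq_Hu[OF ne_v])

lemma blk_idx: "l \<in> {1..d} \<Longrightarrow> (l - 1) div 2^b + 1 \<in> {1..k}"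
proof -
  assume l: "l \<in> {1..d}"
  then have "l - 1 < 2^b * k" using d_def by auto
  then have "(l - 1) div 2^b < k" by (simp add: div_less_iff_less_mult mult.commute)
  then show ?thesis by auto
qed

lemma onehot_u: "l \<in> {1..d} \<Longrightarrow> onehot_concat b (\<lambda>j. hashed_gcws D p X u j \<omega>) l = xv (VA \<omega>) l"
  unfolding onehot_concat_def using hu_VA[OF blk_idx] by simp
lemma onehot_v: "l \<in> {1..d} \<Longrightarrow> onehot_concat b (\<lambda>j. hashed_gcws D p X v j \<omega>) l = yv (VA \<omega>) l"
  unfolding onehot_concat_def using hv_VA[OF blk_idx] by simp

definition "Zt \<omega> = (\<Sum>m\<in>{1..B}.
              count_sketch d (\<lambda>l. X (H l) \<omega>) (\<lambda>l. X (S l) \<omega>) (onehot_concat b (\<lambda>j. hashed_gcws D p X u j \<omega>)) m *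
              count_sketch d (\<lambda>l. X (H l) \<omega>) (\<lambda>l. X (S l) \<omega>) (onehot_concat b (\<lambda>j. hashed_gcws D p X v j \<omega>)) m)"

lemma Zt_V2: "Zt \<omega> = (\<Sum>m\<in>{1..B}.
              count_sketch d (\<lambda>l. V2 \<omega> (H l)) (\<lambda>l. V2 \<omega> (S l)) (xv (VA \<omega>)) m *
              count_sketch d (\<lambda>l. V2 \<omega> (H l)) (\<lambda>l. V2 \<omega> (S l)) (yv (VA \<omega>)) m)"
  unfolding Zt_def
  by (intro sum.cong refl arg_cong2[where f="(*)"] cs_cong3) (auto simp: T2s_def onehot_u onehot_v)

lemma mZt[measurable]: "Zt \<in> borel_measurable M"
  unfolding Zt_V2[abs_def] count_sketch_def by measurable

end

context thm4 begin

definition "ZZt \<omega> = ZZ B d (\<lambda>t. X t \<omega>) (xv (VA \<omega>)) (yv (VA \<omega>))"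

lemma AE_HS: "AE \<omega> in M. \<forall>l\<in>{1..d}. X (H l) \<omega> \<in> real ` {1..B} \<and> (X (S l) \<omega> = 1 \<or> X (S l) \<omega> = -1)"
proof (subst AE_ball_countable)
  show "countable {1..d}" by simp
  show "\<forall>l\<in>{1..d}. AE \<omega> in M. X (H l) \<omega> \<in> real ` {1..B} \<and> (X (S l) \<omega> = 1 \<or> X (S l) \<omega> = -1)"
    using AE_H AE_S by (auto intro: AE_conjI)
qed

lemma AE_Z: "AE \<omega> in M. Zt \<omega> = ZZt \<omega>"
  using AE_HS
proof eventually_elim
  case (elim \<omega>)
  show ?case unfolding Zt_def ZZt_def ZZ_def
  proof (intro sum.cong refl arg_cong2[where f="(*)"] cs_cong3)
    fix l assume l: "l \<in> {1..d}"
    show "X (H l) \<omega> = hc B (X (H l) \<omega>)" using elim l by (auto simp: hc_def)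
    show "X (S l) \<omega> = sc (X (S l) \<omega>)" using elim l by (auto simp: sc_def)
    show "onehot_concat b (\<lambda>j. hashed_gcws D p X u j \<omega>) l = xv (VA \<omega>) l" using l by (rule onehot_u)
    show "onehot_concat b (\<lambda>j. hashed_gcws D p X v j \<omega>) l = yv (VA \<omega>) l" using l by (rule onehot_v)
    show "X (H l) \<omega> = hc B (X (H l) \<omega>)" using elim l by (auto simp: hc_def)
    show "X (S l) \<omega> = sc (X (S l) \<omega>)" using elim l by (auto simp: sc_def)
  qed
qed

lemma mkq[measurable]: "(\<lambda>\<omega>. kq B l l' (V2 \<omega>)) \<in> borel_measurable M"
  using measurable_compose[OF mV2 measurable_kq] by (simp add: comp_def)

lemma ZZt_expand: "ZZt \<omega> = dotp d (xv (VA \<omega>)) (yv (VA \<omega>)) +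
     (\<Sum>l\<in>{1..d}. \<Sum>l'\<in>{1..d}. if l = l' then 0 else xv (VA \<omega>) l * yv (VA \<omega>) l' * kq B l l' (V2 \<omega>))"
  unfolding ZZt_def by (rule ZZ_expand)

lemma mZZt[measurable]: "ZZt \<in> borel_measurable M"
  unfolding ZZt_expand[abs_def] dotp_def by measurable

lemma xv_b: "\<bar>xv w l\<bar> \<le> 1" "\<bar>yv w l\<bar> \<le> 1" by (auto simp: onehot_concat_def)

lemma abs_ZZt: "\<bar>ZZt \<omega>\<bar> \<le> real d + real d * real d"
proof -
  have "\<bar>ZZt \<omega>\<bar> \<le> \<bar>dotp d (xv (VA \<omega>)) (yv (VA \<omega>))\<bar> +
     \<bar>\<Sum>l\<in>{1..d}. \<Sum>l'\<in>{1..d}. if l = l' then 0 else xv (VA \<omega>) l * yv (VA \<omega>) l' * kq B l l' (V2 \<omega>)\<bar>"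
    unfolding ZZt_expand by (rule abs_triangle_ineq)
  also have "\<bar>dotp d (xv (VA \<omega>)) (yv (VA \<omega>))\<bar> \<le> real d" by (rule abs_dotp) (rule xv_b)+
  also have "\<bar>\<Sum>l\<in>{1..d}. \<Sum>l'\<in>{1..d}. if l = l' then 0 else xv (VA \<omega>) l * yv (VA \<omega>) l' * kq B l l' (V2 \<omega>)\<bar>
      \<le> (\<Sum>l\<in>{1..d}. \<Sum>l'\<in>{1..d}. 1)"
  proof -
    have "\<bar>\<Sum>l\<in>{1..d}. \<Sum>l'\<in>{1..d}. if l = l' then 0 else xv (VA \<omega>) l * yv (VA \<omega>) l' * kq B l l' (V2 \<omega>)\<bar>
       \<le> (\<Sum>l\<in>{1..d}. \<bar>\<Sum>l'\<in>{1..d}. if l = l' then 0 else xv (VA \<omega>) l * yv (VA \<omega>) l' * kq B l l' (V2 \<omega>)\<bar>)"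
      by (rule sum_abs)
    also have "\<dots> \<le> (\<Sum>l\<in>{1..d}. \<Sum>l'\<in>{1..d}. \<bar>if l = l' then 0 else xv (VA \<omega>) l * yv (VA \<omega>) l' * kq B l l' (V2 \<omega>)\<bar>)"
      by (intro sum_mono sum_abs)
    also have "\<dots> \<le> (\<Sum>l\<in>{1..d}. \<Sum>l'\<in>{1..d}. 1)"
      by (intro sum_mono) (auto intro!: bnd1 xv_b abs_kq)
    finally show ?thesis .
  qed
  finally show ?thesis by simp
qed

lemma int_ZZt: "integrable M ZZt" by (rule integrable_bounded[OF mZZt abs_ZZt])
lemma int_ZZt2: "integrable M (\<lambda>\<omega>. (ZZt \<omega>)^2)"
proof (rule integrable_bounded[where c="(real d + real d * real d)^2"])
  show "(\<lambda>\<omega>. (ZZt \<omega>)^2) \<in> borel_measurable M" by measurable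
  show "\<bar>(ZZt \<omega>)^2\<bar> \<le> (real d + real d * real d)^2" for \<omega>
  proof -
    have "\<bar>ZZt \<omega>\<bar> \<le> \<bar>real d + real d * real d\<bar>" using abs_ZZt[of \<omega>] by simp
    from abs_le_square_iff[THEN iffD1, OF this] show ?thesis by simp
  qed
qed

lemma EZ_ZZ: "expectation Zt = expectation ZZt"
  by (rule integral_cong_AE[OF mZt mZZt AE_Z])
lemma EZ2_ZZ: "expectation (\<lambda>\<omega>. (Zt \<omega>)^2) = expectation (\<lambda>\<omega>. (ZZt \<omega>)^2)"
  by (rule integral_cong_AE) (use AE_Z in auto)
lemma AE_Z': "AE \<omega> in M. ZZt \<omega> = Zt \<omega>" using AE_Z by eventually_elim simp
lemma int_Zt: "integrable M Zt" by (rule integrable_cong_AE_imp[OF int_ZZt mZt AE_Z'])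
lemma int_Zt2: "integrable M (\<lambda>\<omega>. (Zt \<omega>)^2)"
  by (rule integrable_cong_AE_imp[OF int_ZZt2]) (use AE_Z' in \<open>auto elim!: eventually_mono\<close>)

end

context thm4 begin

abbreviation "acnt \<omega> \<equiv> real (card {j\<in>{1..k}. hashed_gcws D p X u j \<omega> = hashed_gcws D p X v j \<omega>})"

lemma m_acnt[measurable]: "(\<lambda>\<omega>. acnt \<omega>) \<in> borel_measurable M"
  unfolding acount_sum using borel_measurable_integrable[OF ind_int] by (intro borel_measurable_sum) auto

lemma acnt_b: "\<bar>acnt \<omega>\<bar> \<le> real k"
proof -
  have "card {j\<in>{1..k}. hashed_gcws D p X u j \<omega> = hashed_gcws D p X v j \<omega>} \<le> card {1..k}"
    by (intro card_mono) auto
  then show ?thesis by simp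
qed

lemma int_acnt: "integrable M (\<lambda>\<omega>. acnt \<omega>)" by (rule integrable_bounded[OF m_acnt acnt_b])
lemma int_acnt2: "integrable M (\<lambda>\<omega>. (acnt \<omega>)^2)"
proof (rule integrable_bounded[where c="real k * real k"])
  show "(\<lambda>\<omega>. (acnt \<omega>)^2) \<in> borel_measurable M" by measurable
  show "\<bar>(acnt \<omega>)^2\<bar> \<le> real k * real k" for \<omega>
    using acnt_b[of \<omega>] by (simp add: power2_eq_square mult_mono)
qed

lemma AE_dotp: "AE \<omega> in M. dotp d (xv (VA \<omega>)) (yv (VA \<omega>)) = acnt \<omega> \<and> ssum d (xv (VA \<omega>)) = k \<and> ssum d (yv (VA \<omega>)) = k"
  using AE_hashed_range[OF ne_u] AE_hashed_range[OF ne_v]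
proof eventually_elim
  case (elim \<omega>)
  have hu: "Hu D p u j (VA \<omega>) = hashed_gcws D p X u j \<omega>" "Hu D p v j (VA \<omega>) = hashed_gcws D p X v j \<omega>" if "j \<in> {1..k}" for j
    using hu_VA[OF that] hv_VA[OF that] by simp_all
  have "dotp d (xv (VA \<omega>)) (yv (VA \<omega>)) = real (card {j\<in>{1..k}. Hu D p u j (VA \<omega>) = Hu D p v j (VA \<omega>) \<and> Hu D p u j (VA \<omega>) \<in> real ` {..<2^b}})"
    unfolding d_def by (rule dotp_onehot)
  also have "{j\<in>{1..k}. Hu D p u j (VA \<omega>) = Hu D p v j (VA \<omega>) \<and> Hu D p u j (VA \<omega>) \<in> real ` {..<2^b}} =
      {j\<in>{1..k}. hashed_gcws D p X u j \<omega> = hashed_gcws D p X v j \<omega>}"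
    using elim hu by auto
  finally have 1: "dotp d (xv (VA \<omega>)) (yv (VA \<omega>)) = acnt \<omega>" .
  have "ssum d (xv (VA \<omega>)) = real (card {j\<in>{1..k}. Hu D p u j (VA \<omega>) \<in> real ` {..<2^b}})"
    unfolding d_def by (rule ssum_onehot)
  also have "{j\<in>{1..k}. Hu D p u j (VA \<omega>) \<in> real ` {..<2^b}} = {1..k}" using elim hu by auto
  also have "real (card {1..k}) = real k" by simp
  finally have 2: "ssum d (xv (VA \<omega>)) = k" .
  have "ssum d (yv (VA \<omega>)) = real (card {j\<in>{1..k}. Hu D p v j (VA \<omega>) \<in> real ` {..<2^b}})"
    unfolding d_def by (rule ssum_onehot)
  also have "{j\<in>{1..k}. Hu D p v j (VA \<omega>) \<in> real ` {..<2^b}} = {1..k}" using elim hu by auto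
  also have "real (card {1..k}) = real k" by simp
  finally have 3: "ssum d (yv (VA \<omega>)) = k" .
  show ?case using 1 2 3 by simp
qed

lemma mom_hyps:
  "T1s D k \<subseteq> rtags D k d" "T1s D k \<inter> T2s d = {}"
  "\<And>w l. xv w l = 0 \<or> xv w l = 1" "\<And>w l. yv w l = 0 \<or> yv w l = 1"
  using T1s_rtags T1s_T2s onehot_01 by auto

lemma E_ZZt: "expectation ZZt = real k * Pb0"
proof -
  have "expectation (\<lambda>\<omega>. (\<lambda>_. 1) (VA \<omega>) * ZZ B d (\<lambda>t. X t \<omega>) (xv (VA \<omega>)) (yv (VA \<omega>))) =
        expectation (\<lambda>\<omega>. (\<lambda>_. 1) (VA \<omega>) * dotp d (xv (VA \<omega>)) (yv (VA \<omega>)))"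
    by (rule moment1[OF mom_hyps(1,2) _ _ mxv mom_hyps(3) myv mom_hyps(4)]) auto
  then have "expectation ZZt = expectation (\<lambda>\<omega>. dotp d (xv (VA \<omega>)) (yv (VA \<omega>)))"
    unfolding ZZt_def[abs_def] by simp
  also have "\<dots> = expectation (\<lambda>\<omega>. acnt \<omega>)"
  proof (rule integral_cong_AE[OF _ m_acnt])
    show "(\<lambda>\<omega>. dotp d (xv (VA \<omega>)) (yv (VA \<omega>))) \<in> borel_measurable M" unfolding dotp_def by measurable
    show "AE \<omega> in M. dotp d (xv (VA \<omega>)) (yv (VA \<omega>)) = acnt \<omega>" using AE_dotp by (rule eventually_mono) simp
  qed
  also have "\<dots> = real k * Pb0" by (rule E_acount)
  finally show ?thesis .
qed

lemma E_ZZt2: "expectation (\<lambda>\<omega>. (ZZt \<omega>)^2) =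
  (real k * Pb0 + (real k * real k - real k) * Pb0 * Pb0) +
  (real k * real k - 2 * (real k * Pb0) + (real k * Pb0 + (real k * real k - real k) * Pb0 * Pb0)) / real B"
proof -
  have "expectation (\<lambda>\<omega>. (\<lambda>_. 1) (VA \<omega>) * (ZZ B d (\<lambda>t. X t \<omega>) (xv (VA \<omega>)) (yv (VA \<omega>)))^2) =
        expectation (\<lambda>\<omega>. (\<lambda>_. 1) (VA \<omega>) * ((dotp d (xv (VA \<omega>)) (yv (VA \<omega>)))^2 +
             (ssum d (xv (VA \<omega>)) * ssum d (yv (VA \<omega>)) - 2 * dotp d (xv (VA \<omega>)) (yv (VA \<omega>))
              + (dotp d (xv (VA \<omega>)) (yv (VA \<omega>)))^2) / B))"
    by (rule moment2[OF mom_hyps(1,2) _ _ mxv mom_hyps(3) myv mom_hyps(4)]) auto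
  then have "expectation (\<lambda>\<omega>. (ZZt \<omega>)^2) = expectation (\<lambda>\<omega>. (dotp d (xv (VA \<omega>)) (yv (VA \<omega>)))^2 +
             (ssum d (xv (VA \<omega>)) * ssum d (yv (VA \<omega>)) - 2 * dotp d (xv (VA \<omega>)) (yv (VA \<omega>))
              + (dotp d (xv (VA \<omega>)) (yv (VA \<omega>)))^2) / B)"
    unfolding ZZt_def[abs_def] by simp
  also have "\<dots> = expectation (\<lambda>\<omega>. (acnt \<omega>)^2 + (real k * real k - 2 * acnt \<omega> + (acnt \<omega>)^2) / B)"
  proof (rule integral_cong_AE)
    show "(\<lambda>\<omega>. (dotp d (xv (VA \<omega>)) (yv (VA \<omega>)))^2 +
             (ssum d (xv (VA \<omega>)) * ssum d (yv (VA \<omega>)) - 2 * dotp d (xv (VA \<omega>)) (yv (VA \<omega>))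
              + (dotp d (xv (VA \<omega>)) (yv (VA \<omega>)))^2) / B) \<in> borel_measurable M"
      unfolding dotp_def ssum_def by measurable
    show "(\<lambda>\<omega>. (acnt \<omega>)^2 + (real k * real k - 2 * acnt \<omega> + (acnt \<omega>)^2) / B) \<in> borel_measurable M"
      using m_acnt by measurable
    show "AE \<omega> in M. (dotp d (xv (VA \<omega>)) (yv (VA \<omega>)))^2 +
             (ssum d (xv (VA \<omega>)) * ssum d (yv (VA \<omega>)) - 2 * dotp d (xv (VA \<omega>)) (yv (VA \<omega>))
              + (dotp d (xv (VA \<omega>)) (yv (VA \<omega>)))^2) / B =
          (acnt \<omega>)^2 + (real k * real k - 2 * acnt \<omega> + (acnt \<omega>)^2) / B"
      using AE_dotp by (rule eventually_mono) simp
  qed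
  also have "\<dots> = expectation (\<lambda>\<omega>. (acnt \<omega>)^2) + (real k * real k - 2 * expectation (\<lambda>\<omega>. acnt \<omega>) + expectation (\<lambda>\<omega>. (acnt \<omega>)^2)) / B"
  proof -
    have i1: "integrable M (\<lambda>\<omega>. real k * real k - 2 * acnt \<omega>)"
      using int_acnt by (intro Bochner_Integration.integrable_diff) auto
    have i2: "integrable M (\<lambda>\<omega>. real k * real k - 2 * acnt \<omega> + (acnt \<omega>)^2)"
      using i1 int_acnt2 by (rule Bochner_Integration.integrable_add)
    have "expectation (\<lambda>\<omega>. (acnt \<omega>)^2 + (real k * real k - 2 * acnt \<omega> + (acnt \<omega>)^2) / B) =
        expectation (\<lambda>\<omega>. (acnt \<omega>)^2) + expectation (\<lambda>\<omega>. (real k * real k - 2 * acnt \<omega> + (acnt \<omega>)^2) / B)"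
      using int_acnt2 i2 by (intro Bochner_Integration.integral_add) auto
    also have "expectation (\<lambda>\<omega>. (real k * real k - 2 * acnt \<omega> + (acnt \<omega>)^2) / B) =
        expectation (\<lambda>\<omega>. real k * real k - 2 * acnt \<omega> + (acnt \<omega>)^2) / B"
      by (rule integral_divide_zero)
    also have "expectation (\<lambda>\<omega>. real k * real k - 2 * acnt \<omega> + (acnt \<omega>)^2) =
        expectation (\<lambda>\<omega>. real k * real k - 2 * acnt \<omega>) + expectation (\<lambda>\<omega>. (acnt \<omega>)^2)"
      using i1 int_acnt2 by (rule Bochner_Integration.integral_add)
    also have "expectation (\<lambda>\<omega>. real k * real k - 2 * acnt \<omega>) = real k * real k - 2 * expectation (\<lambda>\<omega>. acnt \<omega>)"
      using int_acnt by (subst Bochner_Integration.integral_diff) (auto simp: prob_space)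
    finally show ?thesis .
  qed
  also have "\<dots> = (real k * Pb0 + (real k * real k - real k) * Pb0 * Pb0) +
      (real k * real k - 2 * (real k * Pb0) + (real k * Pb0 + (real k * real k - real k) * Pb0 * Pb0)) / real B"
    unfolding E_acount E_acount2 ..
  finally show ?thesis .
qed

end

lemma (in prob_space) integral_uniform:
  fixes f :: "'a \<Rightarrow> real"
  assumes E: "E \<in> sets M" and pos: "measure M E > 0" and f: "f \<in> borel_measurable M"
  shows "integral\<^sup>L (uniform_measure M E) f = expectation (\<lambda>\<omega>. indicator E \<omega> * f \<omega>) / measure M E"
proof -
  have "uniform_measure M E = density M (\<lambda>x. ennreal (indicator E x / measure M E))"
    unfolding uniform_measure_def
  proof (intro arg_cong[where f="density M"] ext)
    fix x
    show "indicator E x / emeasure M E = ennreal (indicator E x / measure M E)"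
      using pos divide_ennreal[of 1 "measure M E"] by (cases "x \<in> E") (auto simp: emeasure_eq_measure)
  qed
  also have "integral\<^sup>L \<dots> f = expectation (\<lambda>x. (indicator E x / measure M E) *\<^sub>R f x)"
    by (rule integral_density) (use E f in auto)
  also have "\<dots> = expectation (\<lambda>x. indicator E x * f x / measure M E)"
    by simp
  also have "\<dots> = expectation (\<lambda>\<omega>. indicator E \<omega> * f \<omega>) / measure M E"
    by (rule integral_divide_zero)
  finally show ?thesis .
qed

context thm4 begin

lemma conditional:
  fixes \<alpha> \<beta> :: "nat \<Rightarrow> real"
  defines "E \<equiv> {\<omega> \<in> space M. \<forall>j\<in>{1..k}. hashed_gcws D p X u j \<omega> = \<alpha> j \<and> hashed_gcws D p X v j \<omega> = \<beta> j}"
  defines "a \<equiv> real (card {j\<in>{1..k}. \<alpha> j = \<beta> j})"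
  assumes pos: "measure M E > 0"
  shows "integral\<^sup>L (uniform_measure M E) Zt = a"
    and "integral\<^sup>L (uniform_measure M E) (\<lambda>\<omega>. (Zt \<omega> - integral\<^sup>L (uniform_measure M E) Zt)^2) = (real k ^ 2 + a ^ 2 - 2 * a) / real B"
proof -
  have E_eq: "E = {\<omega> \<in> space M. \<forall>j\<in>{1..k}. Hu D p u j (VA \<omega>) = \<alpha> j \<and> Hu D p v j (VA \<omega>) = \<beta> j}"
    unfolding E_def using hu_VA hv_VA by auto
  have E_sets: "E \<in> sets M" unfolding E_eq by measurable
  define phi where "phi w = (if \<forall>j\<in>{1..k}. Hu D p u j w = \<alpha> j \<and> Hu D p v j w = \<beta> j then 1 else 0 :: real)" for w
  have phim: "phi \<in> borel_measurable (PiM (T1s D k) (\<lambda>_. borel))"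
    unfolding phi_def using measurable_Hu_any[OF ne_u] measurable_Hu_any[OF ne_v] by measurable
  have phib: "\<bar>phi w\<bar> \<le> 1" for w by (simp add: phi_def)
  have phiE: "phi (VA \<omega>) = indicator E \<omega>" if "\<omega> \<in> space M" for \<omega>
    using that unfolding phi_def E_eq by (auto simp: indicator_def)
  have rng: "\<alpha> j \<in> real ` {..<2^b} \<and> \<beta> j \<in> real ` {..<2^b}" if j: "j \<in> {1..k}" for j
  proof (rule ccontr)
    assume nr: "\<not> (\<alpha> j \<in> real ` {..<2^b} \<and> \<beta> j \<in> real ` {..<2^b})"
    have "AE \<omega> in M. \<omega> \<in> E \<longleftrightarrow> \<omega> \<in> {}"
      using AE_hashed_range[OF ne_u] AE_hashed_range[OF ne_v]
    proof eventually_elim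
      case (elim \<omega>)
      have "\<omega> \<notin> E"
      proof
        assume "\<omega> \<in> E"
        then have e1: "hashed_gcws D p X u j \<omega> = \<alpha> j" and e2: "hashed_gcws D p X v j \<omega> = \<beta> j" using j unfolding E_def by auto
        have h1: "hashed_gcws D p X u j \<omega> \<in> real ` {..<2^b}" by (rule bspec[OF elim(1) j])
        have h2: "hashed_gcws D p X v j \<omega> \<in> real ` {..<2^b}" by (rule bspec[OF elim(2) j])
        from h1 h2 nr show False unfolding e1 e2 by blast
      qed
      then show ?case by simp
    qed
    then have "measure M E = measure M {}" by (rule measure_eq_AE) (use E_sets in auto)
    then show False using pos by simp
  qed
  have onE: "Hu D p u j (VA \<omega>) = \<alpha> j" "Hu D p v j (VA \<omega>) = \<beta> j" if "\<omega> \<in> E" "j \<in> {1..k}" for \<omega> j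
    using that unfolding E_eq by auto
  have dotE: "dotp d (xv (VA \<omega>)) (yv (VA \<omega>)) = a" if "\<omega> \<in> E" for \<omega>
  proof -
    have "dotp d (xv (VA \<omega>)) (yv (VA \<omega>)) = real (card {j\<in>{1..k}. Hu D p u j (VA \<omega>) = Hu D p v j (VA \<omega>) \<and> Hu D p u j (VA \<omega>) \<in> real ` {..<2^b}})"
      unfolding d_def by (rule dotp_onehot)
    also have "{j\<in>{1..k}. Hu D p u j (VA \<omega>) = Hu D p v j (VA \<omega>) \<and> Hu D p u j (VA \<omega>) \<in> real ` {..<2^b}} = {j\<in>{1..k}. \<alpha> j = \<beta> j}"
      using onE[OF that] rng by auto
    finally show ?thesis unfolding a_def .
  qed
  have ssE: "ssum d (xv (VA \<omega>)) = k" "ssum d (yv (VA \<omega>)) = k" if "\<omega> \<in> E" for \<omega>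
  proof -
    have "ssum d (xv (VA \<omega>)) = real (card {j\<in>{1..k}. Hu D p u j (VA \<omega>) \<in> real ` {..<2^b}})"
      unfolding d_def by (rule ssum_onehot)
    also have "{j\<in>{1..k}. Hu D p u j (VA \<omega>) \<in> real ` {..<2^b}} = {1..k}" using onE[OF that] rng by auto
    also have "real (card {1..k}) = real k" by simp
    finally show "ssum d (xv (VA \<omega>)) = k" .
    have "ssum d (yv (VA \<omega>)) = real (card {j\<in>{1..k}. Hu D p v j (VA \<omega>) \<in> real ` {..<2^b}})"
      unfolding d_def by (rule ssum_onehot)
    also have "{j\<in>{1..k}. Hu D p v j (VA \<omega>) \<in> real ` {..<2^b}} = {1..k}" using onE[OF that] rng by auto
    also have "real (card {1..k}) = real k" by simp
    finally show "ssum d (yv (VA \<omega>)) = k" .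
  qed
  have PE: "expectation (\<lambda>\<omega>. phi (VA \<omega>)) = measure M E"
  proof -
    have "expectation (\<lambda>\<omega>. phi (VA \<omega>)) = expectation (indicator E)"
      by (intro Bochner_Integration.integral_cong refl) (rule phiE)
    also have "\<dots> = measure M E" using E_sets by (simp add: Int_absorb2 sets.sets_into_space)
    finally show ?thesis .
  qed
  have int_phi: "integrable M (\<lambda>\<omega>. phi (VA \<omega>))"
    using measurable_compose[OF mVA phim] phib by (intro integrable_bounded[where c=1]) (auto simp: comp_def)
  have m1: "expectation (\<lambda>\<omega>. indicator E \<omega> * Zt \<omega>) = a * measure M E"
  proof -
    have "expectation (\<lambda>\<omega>. indicator E \<omega> * Zt \<omega>) = expectation (\<lambda>\<omega>. phi (VA \<omega>) * ZZt \<omega>)"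
    proof (rule integral_cong_AE)
      show "(\<lambda>\<omega>. indicator E \<omega> * Zt \<omega>) \<in> borel_measurable M" using E_sets by measurable
      show "(\<lambda>\<omega>. phi (VA \<omega>) * ZZt \<omega>) \<in> borel_measurable M"
        using measurable_compose[OF mVA phim] by (simp add: comp_def)
      show "AE \<omega> in M. indicator E \<omega> * Zt \<omega> = phi (VA \<omega>) * ZZt \<omega>"
        using AE_Z AE_space by eventually_elim (simp add: phiE)
    qed
    also have "\<dots> = expectation (\<lambda>\<omega>. phi (VA \<omega>) * dotp d (xv (VA \<omega>)) (yv (VA \<omega>)))"
      unfolding ZZt_def by (rule moment1[OF mom_hyps(1,2) phim phib mxv mom_hyps(3) myv mom_hyps(4)])
    also have "\<dots> = expectation (\<lambda>\<omega>. a * phi (VA \<omega>))"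
      by (intro Bochner_Integration.integral_cong refl) (auto simp: phiE dotE indicator_def)
    also have "\<dots> = a * measure M E" using PE by simp
    finally show ?thesis .
  qed
  have m2: "expectation (\<lambda>\<omega>. indicator E \<omega> * (Zt \<omega>)^2) = (a^2 + (real k * real k - 2 * a + a^2) / B) * measure M E"
  proof -
    have "expectation (\<lambda>\<omega>. indicator E \<omega> * (Zt \<omega>)^2) = expectation (\<lambda>\<omega>. phi (VA \<omega>) * (ZZt \<omega>)^2)"
    proof (rule integral_cong_AE)
      show "(\<lambda>\<omega>. indicator E \<omega> * (Zt \<omega>)^2) \<in> borel_measurable M" using E_sets by measurable
      show "(\<lambda>\<omega>. phi (VA \<omega>) * (ZZt \<omega>)^2) \<in> borel_measurable M"
        using measurable_compose[OF mVA phim] by (simp add: comp_def)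
      show "AE \<omega> in M. indicator E \<omega> * (Zt \<omega>)^2 = phi (VA \<omega>) * (ZZt \<omega>)^2"
        using AE_Z AE_space by eventually_elim (simp add: phiE)
    qed
    also have "\<dots> = expectation (\<lambda>\<omega>. phi (VA \<omega>) *
            ((dotp d (xv (VA \<omega>)) (yv (VA \<omega>)))^2 +
             (ssum d (xv (VA \<omega>)) * ssum d (yv (VA \<omega>)) - 2 * dotp d (xv (VA \<omega>)) (yv (VA \<omega>))
              + (dotp d (xv (VA \<omega>)) (yv (VA \<omega>)))^2) / B))"
      unfolding ZZt_def by (rule moment2[OF mom_hyps(1,2) phim phib mxv mom_hyps(3) myv mom_hyps(4)])
    also have "\<dots> = expectation (\<lambda>\<omega>. (a^2 + (real k * real k - 2 * a + a^2) / B) * phi (VA \<omega>))"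
      by (intro Bochner_Integration.integral_cong refl) (auto simp: phiE dotE ssE indicator_def)
    also have "\<dots> = (a^2 + (real k * real k - 2 * a + a^2) / B) * measure M E" using PE by simp
    finally show ?thesis .
  qed
  have mE: "measure M E \<noteq> 0" using pos by simp
  show i1: "integral\<^sup>L (uniform_measure M E) Zt = a"
    unfolding integral_uniform[OF E_sets pos mZt] m1 using mE by simp
  have i2: "integral\<^sup>L (uniform_measure M E) (\<lambda>\<omega>. (Zt \<omega>)^2) = a^2 + (real k * real k - 2 * a + a^2) / B"
    using integral_uniform[OF E_sets pos, of "\<lambda>\<omega>. (Zt \<omega>)^2"] m2 mE by simp
  interpret N: prob_space "uniform_measure M E"
    by (rule prob_space_uniform_measure) (use pos E_sets in \<open>auto simp: emeasure_eq_measure\<close>)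
  have aeN: "AE \<omega> in uniform_measure M E. \<bar>Zt \<omega>\<bar> \<le> real d + real d * real d"
    by (rule AE_uniform_measureI[OF E_sets]) (use AE_Z in \<open>auto elim!: eventually_mono intro: abs_ZZt\<close>)
  have mN: "Zt \<in> borel_measurable (uniform_measure M E)" using mZt by (simp cong: measurable_cong_sets)
  have iN1: "integrable (uniform_measure M E) Zt"
    using aeN mN by (intro N.integrable_const_bound[where B="real d + real d * real d"]) auto
  have iN2: "integrable (uniform_measure M E) (\<lambda>\<omega>. (Zt \<omega>)^2)"
  proof (intro N.integrable_const_bound[where B="(real d + real d * real d)^2"])
    show "(\<lambda>\<omega>. (Zt \<omega>)^2) \<in> borel_measurable (uniform_measure M E)" using mN by measurable
    show "AE \<omega> in uniform_measure M E. norm ((Zt \<omega>)^2) \<le> (real d + real d * real d)^2"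
      using aeN
    proof eventually_elim
      case (elim \<omega>)
      then have "\<bar>Zt \<omega>\<bar> \<le> \<bar>real d + real d * real d\<bar>" by simp
      from abs_le_square_iff[THEN iffD1, OF this] show ?case by simp
    qed
  qed
  show "integral\<^sup>L (uniform_measure M E) (\<lambda>\<omega>. (Zt \<omega> - integral\<^sup>L (uniform_measure M E) Zt)^2) = (real k ^ 2 + a ^ 2 - 2 * a) / real B"
  proof -
    have "integral\<^sup>L (uniform_measure M E) (\<lambda>\<omega>. (Zt \<omega> - integral\<^sup>L (uniform_measure M E) Zt)^2) =
       integral\<^sup>L (uniform_measure M E) (\<lambda>\<omega>. (Zt \<omega>)^2) - (integral\<^sup>L (uniform_measure M E) Zt)^2"
      by (rule N.variance_expand[OF iN1 iN2])
    also have "\<dots> = (a^2 + (real k * real k - 2 * a + a^2) / B) - a^2" unfolding i1 i2 ..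
    also have "real k * real k - 2 * a + a^2 = real k ^ 2 + a ^ 2 - 2 * a" by (simp add: power2_eq_square)
    also have "(a^2 + (real k ^ 2 + a ^ 2 - 2 * a) / B) - a^2 = (real k ^ 2 + a ^ 2 - 2 * a) / real B" by (rule add_diff_cancel_left')
    finally show ?thesis .
  qed
qed

end

theorem theorem4:
  fixes M :: "'a measure" and X :: "rtag \<Rightarrow> 'a \<Rightarrow> real"
    and D b k B :: nat and p :: real and u v :: "nat \<Rightarrow> real"
  defines "d \<equiv> 2^b * k"
  defines "hu \<equiv> hashed_gcws D p X u"
  defines "hv \<equiv> hashed_gcws D p X v"
  defines "Z \<equiv> (\<lambda>\<omega>. (\<Sum>m\<in>{1..B}.
              count_sketch d (\<lambda>l. X (H l) \<omega>) (\<lambda>l. X (S l) \<omega>) (onehot_concat b (\<lambda>j. hu j \<omega>)) m *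
              count_sketch d (\<lambda>l. X (H l) \<omega>) (\<lambda>l. X (S l) \<omega>) (onehot_concat b (\<lambda>j. hv j \<omega>)) m))"
  defines "acount \<equiv> (\<lambda>\<omega>. card {j \<in> {1..k}. hu j \<omega> = hv j \<omega>})"
  defines "Pb \<equiv> measure M {\<omega> \<in> space M. hu 1 \<omega> = hv 1 \<omega>}"
  assumes M: "prob_space M"
    and D: "D \<ge> 1" and p: "p > 0" and b: "b \<ge> 1" and k: "k \<ge> 1" and B: "B \<ge> 1"
    and u: "\<exists>i\<in>{1..D}. u i \<noteq> 0" and v: "\<exists>i\<in>{1..D}. v i \<noteq> 0"
    and indep: "prob_space.indep_vars M (\<lambda>_. borel) X (rtags D k d)"
    and distR: "\<And>j i. j \<in> {1..k} \<Longrightarrow> i \<in> {1..2*D} \<Longrightarrow>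
                   distributed M lborel (X (R j i)) (erlang_density 1 1)"
    and distC: "\<And>j i. j \<in> {1..k} \<Longrightarrow> i \<in> {1..2*D} \<Longrightarrow>
                   distributed M lborel (X (C j i)) (erlang_density 1 1)"
    and distB: "\<And>j i. j \<in> {1..k} \<Longrightarrow> i \<in> {1..2*D} \<Longrightarrow>
                   distr M lborel (X (Bt j i)) = uniform_measure lborel {0..1}"
    and distG: "\<And>j i t n. j \<in> {1..k} \<Longrightarrow> i \<in> {1..2*D} \<Longrightarrow> n < 2^b \<Longrightarrow>
                   measure M {\<omega> \<in> space M. X (G j i t) \<omega> = real n} = 1 / 2^b"
    and distH: "\<And>l m. l \<in> {1..d} \<Longrightarrow> m \<in> {1..B} \<Longrightarrow>
                   measure M {\<omega> \<in> space M. X (H l) \<omega> = real m} = 1 / B"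
    and distS: "\<And>l. l \<in> {1..d} \<Longrightarrow>
                   measure M {\<omega> \<in> space M. X (S l) \<omega> = 1} = 1 / 2 \<and>
                   measure M {\<omega> \<in> space M. X (S l) \<omega> = -1} = 1 / 2"
  shows
    "(\<forall>\<alpha> \<beta> :: nat \<Rightarrow> real.
        let E = {\<omega> \<in> space M. \<forall>j\<in>{1..k}. hu j \<omega> = \<alpha> j \<and> hv j \<omega> = \<beta> j};
            a = real (card {j \<in> {1..k}. \<alpha> j = \<beta> j});
            N = uniform_measure M E
        in measure M E > 0 \<longrightarrow>
           (\<integral>\<omega>. Z \<omega> \<partial>N) = a \<and>
           (\<integral>\<omega>. (Z \<omega> - (\<integral>\<omega>'. Z \<omega>' \<partial>N))\<^sup>2 \<partial>N) = (real k ^ 2 + a ^ 2 - 2 * a) / real B)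
     \<and> (\<forall>n. measure M {\<omega> \<in> space M. acount \<omega> = n} = pmf (binomial_pmf k Pb) n)
     \<and> (\<integral>\<omega>. Z \<omega> \<partial>M) = real k * Pb
     \<and> (\<integral>\<omega>. (Z \<omega> - (\<integral>\<omega>'. Z \<omega>' \<partial>M))\<^sup>2 \<partial>M)
          = (real k ^ 2 + real k ^ 2 * Pb ^ 2 - real k * Pb ^ 2 - real k * Pb) / real B
            + real k * Pb * (1 - Pb)
     \<and> (\<integral>\<omega>. Z \<omega> / real k \<partial>M) = Pb
     \<and> (\<integral>\<omega>. (Z \<omega> / real k - (\<integral>\<omega>'. Z \<omega>' / real k \<partial>M))\<^sup>2 \<partial>M)
          = Pb * (1 - Pb) / real k + (1 + Pb ^ 2 - Pb ^ 2 / real k - Pb / real k) / real B"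
proof -
  interpret prob_space M by (rule M)
  interpret T: thm4 M X D b k B d p u v
  proof (unfold_locales)
    show "d = 2^b * k" by (simp add: d_def)
  qed (use D k B u v indep distR distC distB distG distH distS in \<open>simp_all add: d_def\<close>)
  have Zeq: "Z = T.Zt" unfolding Z_def hu_def hv_def by (simp add: fun_eq_iff T.Zt_def)
  have Pbeq: "Pb = T.Pb0" unfolding Pb_def hu_def hv_def ..
  have EZ: "(\<integral>\<omega>. Z \<omega> \<partial>M) = real k * Pb"
    unfolding Zeq Pbeq T.EZ_ZZ T.E_ZZt ..
  have VZ: "(\<integral>\<omega>. (Z \<omega> - (\<integral>\<omega>'. Z \<omega>' \<partial>M))\<^sup>2 \<partial>M)
          = (real k ^ 2 + real k ^ 2 * Pb ^ 2 - real k * Pb ^ 2 - real k * Pb) / real B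
            + real k * Pb * (1 - Pb)"
  proof -
    have "(\<integral>\<omega>. (Z \<omega> - (\<integral>\<omega>'. Z \<omega>' \<partial>M))\<^sup>2 \<partial>M) = expectation (\<lambda>\<omega>. (T.Zt \<omega>)^2) - (expectation T.Zt)^2"
      unfolding Zeq by (rule variance_expand[OF T.int_Zt T.int_Zt2])
    also have "\<dots> = ((real k * Pb + (real k * real k - real k) * Pb * Pb) +
      (real k * real k - 2 * (real k * Pb) + (real k * Pb + (real k * real k - real k) * Pb * Pb)) / real B) - (real k * Pb)^2"
      unfolding T.EZ2_ZZ T.E_ZZt2 T.EZ_ZZ T.E_ZZt Pbeq ..
    also have "\<dots> = (real k ^ 2 + real k ^ 2 * Pb ^ 2 - real k * Pb ^ 2 - real k * Pb) / real B
            + real k * Pb * (1 - Pb)"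
      by (simp add: power2_eq_square field_simps)
    finally show ?thesis .
  qed
  have kpos: "real k > 0" using k by simp
  have EZk: "(\<integral>\<omega>. Z \<omega> / real k \<partial>M) = Pb"
    using EZ kpos by simp
  have VZk: "(\<integral>\<omega>. (Z \<omega> / real k - (\<integral>\<omega>'. Z \<omega>' / real k \<partial>M))\<^sup>2 \<partial>M)
          = Pb * (1 - Pb) / real k + (1 + Pb ^ 2 - Pb ^ 2 / real k - Pb / real k) / real B"
  proof -
    have "(\<lambda>\<omega>. (Z \<omega> / real k - (\<integral>\<omega>'. Z \<omega>' / real k \<partial>M))\<^sup>2) = (\<lambda>\<omega>. (Z \<omega> - (\<integral>\<omega>'. Z \<omega>' \<partial>M))\<^sup>2 / (real k)^2)"
      using kpos by (simp add: EZk EZ fun_eq_iff power2_eq_square field_simps)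
    then have "(\<integral>\<omega>. (Z \<omega> / real k - (\<integral>\<omega>'. Z \<omega>' / real k \<partial>M))\<^sup>2 \<partial>M) =
        (\<integral>\<omega>. (Z \<omega> - (\<integral>\<omega>'. Z \<omega>' \<partial>M))\<^sup>2 \<partial>M) / (real k)^2"
      by simp
    also have "\<dots> = ((real k ^ 2 + real k ^ 2 * Pb ^ 2 - real k * Pb ^ 2 - real k * Pb) / real B
            + real k * Pb * (1 - Pb)) / (real k)^2" unfolding VZ ..
    also have "\<dots> = Pb * (1 - Pb) / real k + (1 + Pb ^ 2 - Pb ^ 2 / real k - Pb / real k) / real B"
      using kpos B by (simp add: power2_eq_square field_simps)
    finally show ?thesis .
  qed
  have cond: "\<forall>\<alpha> \<beta> :: nat \<Rightarrow> real.
        let E = {\<omega> \<in> space M. \<forall>j\<in>{1..k}. hu j \<omega> = \<alpha> j \<and> hv j \<omega> = \<beta> j};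
            a = real (card {j \<in> {1..k}. \<alpha> j = \<beta> j});
            N = uniform_measure M E
        in measure M E > 0 \<longrightarrow>
           (\<integral>\<omega>. Z \<omega> \<partial>N) = a \<and>
           (\<integral>\<omega>. (Z \<omega> - (\<integral>\<omega>'. Z \<omega>' \<partial>N))\<^sup>2 \<partial>N) = (real k ^ 2 + a ^ 2 - 2 * a) / real B"
  proof (intro allI)
    fix \<alpha> \<beta> :: "nat \<Rightarrow> real"
    show "let E = {\<omega> \<in> space M. \<forall>j\<in>{1..k}. hu j \<omega> = \<alpha> j \<and> hv j \<omega> = \<beta> j};
            a = real (card {j \<in> {1..k}. \<alpha> j = \<beta> j});
            N = uniform_measure M E
        in measure M E > 0 \<longrightarrow>
           (\<integral>\<omega>. Z \<omega> \<partial>N) = a \<and>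
           (\<integral>\<omega>. (Z \<omega> - (\<integral>\<omega>'. Z \<omega>' \<partial>N))\<^sup>2 \<partial>N) = (real k ^ 2 + a ^ 2 - 2 * a) / real B"
      unfolding Let_def Zeq hu_def hv_def using T.conditional[of \<alpha> \<beta>] by blast
  qed
  have bin: "\<forall>n. measure M {\<omega> \<in> space M. acount \<omega> = n} = pmf (binomial_pmf k Pb) n"
    unfolding acount_def hu_def hv_def Pbeq using T.binomial by blast
  show ?thesis using cond bin EZ VZ EZk VZk by blast
qed

end
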